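(* Let $1\le k\le n$. The image of the map $P:P\Lambda^{n-k,k}\to\mathcal{P}^k(SM_n)$, $\tau\mapsto P_\tau$, coincides with the space $\mathcal{M}_k$ spanned by the $(k\times k)$-minors.
   Context: On $\mathbb{R}^n\times(\mathbb{R}^n)^*$ with coordinates $(x,y)$ and symplectic form $\omega_s=\sum_i dx_i\wedge dy_i$, $\Lambda^{n-k,k}$ is the space of constant complex $n$-forms that are linear combinations of $dx_I\wedge dy_J$ with $|I|=n-k$, $|J|=k$, and $P\Lambda^{n-k,k}=\{\tau\in\Lambda^{n-k,k}:\omega_s\wedge\tau=0\}$ (primitive forms). Each such $\tau$ is extended $\mathbb{C}$-linearly to a constant holomorphic form on $\mathbb{C}^n\times(\mathbb{C}^n)^*$ with coordinates $(z,w)$ ($dx_i\mapsto dz_i$, $dy_i\mapsto dw_i$). $SM_n$ denotes complex symmetric $(n\times n)$-matrices, $\mathcal{P}^k(SM_n)$ the $k$-homogeneous polynomials on it, and $\mathcal{M}_k\subset\mathcal{P}^k(SM_n)$ the span of the $(k\times k)$-minors. For $Q\in SM_n$ let $F_Q:\mathbb{C}^n\to\mathbb{C}^n\times(\mathbb{C}^n)^*$, $F_Q(z)=(z,z^TQ)$; then $P_\tau\in\mathcal{P}^k(SM_n)$ is the unique polynomial with $F_Q^*\tau=P_\tau(Q)\,dz_1\wedge\dots\wedge dz_n$. *)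

theory Defs
  imports Complex_Main "Jordan_Normal_Form.Determinant" "Jordan_Normal_Form.DL_Submatrix"
begin

text \<open>Constant complex forms on C^n x (C^n)^* (coordinates z_0..z_(n-1), w_0..w_(n-1)).
  Generators of the exterior algebra are indexed by nat: index i < n stands for dz_i (= dx_i),
  index n + j stands for dw_j (= dy_j).  A form is given by its coefficient function on
  finite sets S of generators; S stands for the wedge of the generators in S in increasing order.\<close>

type_synonym cform = "nat set \<Rightarrow> complex"

definition wsign :: "nat set \<Rightarrow> nat set \<Rightarrow> complex" where
  "wsign S T = (-1) ^ card {(s, t). s \<in> S \<and> t \<in> T \<and> t < s}"

text \<open>Wedge product: e_S wedge e_T = wsign S T * e_(S union T) if S, T disjoint, 0 otherwise.\<close>
definition wedge :: "cform \<Rightarrow> cform \<Rightarrow> cform" where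
  "wedge \<alpha> \<beta> U = (\<Sum>S\<in>Pow U. wsign S (U - S) * \<alpha> S * \<beta> (U - S))"

definition unit_form :: cform where
  "unit_form S = (if S = {} then 1 else 0)"

definition wedge_list :: "cform list \<Rightarrow> cform" where
  "wedge_list xs = foldr wedge xs unit_form"

text \<open>The standard symplectic form omega_s = sum_i dx_i wedge dy_i.\<close>
definition omega_s :: "nat \<Rightarrow> cform" where
  "omega_s n S = (if \<exists>i<n. S = {i, n + i} then 1 else 0)"

text \<open>Lambda^(n-k,k): combinations of dx_I wedge dy_J with |I| = n-k, |J| = k.\<close>
definition Lambda :: "nat \<Rightarrow> nat \<Rightarrow> cform set" where
  "Lambda n k = {\<tau>. \<forall>S. \<tau> S \<noteq> 0 \<longrightarrow>
      S \<subseteq> {0..<2*n} \<and> card (S \<inter> {0..<n}) = n - k \<and> card (S \<inter> {n..<2*n}) = k}"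

definition PLambda :: "nat \<Rightarrow> nat \<Rightarrow> cform set" where
  "PLambda n k = {\<tau> \<in> Lambda n k. wedge (omega_s n) \<tau> = (\<lambda>_. 0)}"

definition SM :: "nat \<Rightarrow> complex mat set" where
  "SM n = {Q. Q \<in> carrier_mat n n \<and> transpose_mat Q = Q}"

text \<open>Pullback along F_Q(z) = (z, z^T Q) of the generator with index s, as a 1-form in dz:
  dz_s pulls back to dz_s, and dw_j pulls back to sum_i Q_(i,j) dz_i.\<close>
definition pull1 :: "nat \<Rightarrow> complex mat \<Rightarrow> nat \<Rightarrow> cform" where
  "pull1 n Q s T = (if \<exists>i<n. T = {i} then
      (let i = (THE i. T = {i}) in
        if s < n then (if s = i then 1 else 0) else Q $$ (i, s - n))
    else 0)"

text \<open>F_Q^* tau = P_tau(Q) dz_0 wedge ... wedge dz_(n-1).\<close>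
definition P_form :: "nat \<Rightarrow> cform \<Rightarrow> complex mat \<Rightarrow> complex" where
  "P_form n \<tau> Q = (\<Sum>S\<in>{S. S \<subseteq> {0..<2*n}}.
      \<tau> S * wedge_list (map (pull1 n Q) (sorted_list_of_set S)) {0..<n})"

definition minor :: "complex mat \<Rightarrow> nat set \<Rightarrow> nat set \<Rightarrow> complex" where
  "minor Q R C = det (submatrix Q R C)"

definition minor_index :: "nat \<Rightarrow> nat \<Rightarrow> (nat set \<times> nat set) set" where
  "minor_index n k = {(R, C). R \<subseteq> {0..<n} \<and> C \<subseteq> {0..<n} \<and> card R = k \<and> card C = k}"

definition M_span :: "nat \<Rightarrow> nat \<Rightarrow> (complex mat \<Rightarrow> complex) set" where
  "M_span n k = {restrict (\<lambda>Q. \<Sum>RC\<in>minor_index n k. c RC * minor Q (fst RC) (snd RC)) (SM n)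
                 | c. True}"

end

theory Submission
  imports Defs
begin


definition one_form :: "cform \<Rightarrow> bool" where
  "one_form a \<longleftrightarrow> (\<forall>T. a T \<noteq> 0 \<longrightarrow> (\<exists>x. T = {x}))"

definition sg :: "nat \<Rightarrow> nat set \<Rightarrow> complex" where
  "sg u U = (-1) ^ card {t\<in>U. t < u}"

lemma wedge_infinite: "infinite U \<Longrightarrow> wedge a b U = 0"
  unfolding wedge_def by simp

lemma wsign_single: "finite U \<Longrightarrow> wsign {u} U = sg u U"
proof -
  assume U: "finite U"
  have "{(s, t). s \<in> {u} \<and> t \<in> U \<and> t < s} = (\<lambda>t. (u,t)) ` {t\<in>U. t < u}" by auto
  moreover have "card ((\<lambda>t. (u,t)) ` {t\<in>U. t < u}) = card {t\<in>U. t < u}"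
    by (rule card_image) (auto simp: inj_on_def)
  ultimately show ?thesis unfolding wsign_def sg_def by simp
qed

lemma wedge_one:
  assumes a: "one_form a" and U: "finite U"
  shows "wedge a b U = (\<Sum>u\<in>U. sg u (U - {u}) * a {u} * b (U - {u}))"
proof -
  have "wedge a b U = (\<Sum>S\<in>(\<lambda>u. {u}) ` U. wsign S (U - S) * a S * b (U - S))"
    unfolding wedge_def
  proof (rule sum.mono_neutral_right)
    show "finite (Pow U)" using U by simp
    show "(\<lambda>u. {u}) ` U \<subseteq> Pow U" by auto
    show "\<forall>i\<in>Pow U - (\<lambda>u. {u}) ` U. wsign i (U - i) * a i * b (U - i) = 0"
    proof
      fix S assume "S \<in> Pow U - (\<lambda>u. {u}) ` U"
      then have "a S = 0" using a unfolding one_form_def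
        by (metis DiffD1 DiffD2 PowD image_eqI insert_subset)
      then show "wsign S (U - S) * a S * b (U - S) = 0" by simp
    qed
  qed
  also have "\<dots> = (\<Sum>u\<in>U. wsign {u} (U - {u}) * a {u} * b (U - {u}))"
    by (subst sum.reindex) (auto simp: inj_on_def)
  also have "\<dots> = (\<Sum>u\<in>U. sg u (U - {u}) * a {u} * b (U - {u}))"
    using U by (simp add: wsign_single)
  finally show ?thesis .
qed

lemma sg_remove_less:
  assumes "finite U" "u \<in> U" "v \<in> U" "u < v"
  shows "sg v U = - sg v (U - {u})" "sg u (U - {v}) = sg u U"
proof -
  have "{t\<in>U. t < v} = insert u {t\<in>U - {u}. t < v}" using assms by auto
  then have "card {t\<in>U. t < v} = Suc (card {t\<in>U - {u}. t < v})" using assms by simp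
  then show "sg v U = - sg v (U - {u})" unfolding sg_def by simp
  have "{t\<in>U - {v}. t < u} = {t\<in>U. t < u}" using assms by auto
  then show "sg u (U - {v}) = sg u U" unfolding sg_def by simp
qed

lemma sg_swap:
  assumes "finite U" "u \<in> U" "v \<in> U" "u \<noteq> v"
  shows "sg u (U - {u}) * sg v (U - {u} - {v}) = - (sg v (U - {v}) * sg u (U - {v} - {u}))"
proof -
  have e: "sg x (U - {x}) = sg x U" for x unfolding sg_def by (rule arg_cong[where f="\<lambda>S. _ ^ card S"]) auto
  have e2: "sg x (U - {y} - {x}) = sg x (U - {y})" for x y unfolding sg_def by (rule arg_cong[where f="\<lambda>S. _ ^ card S"]) auto
  show ?thesis
  proof (cases "u < v")
    case True
    then show ?thesis using sg_remove_less[OF assms(1,2,3) True] by (simp add: e e2)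
  next
    case False
    then have "v < u" using assms by simp
    then show ?thesis using sg_remove_less[OF assms(1,3,2)] by (simp add: e e2)
  qed
qed

lemma wedge_anticomm:
  assumes a: "one_form a" and b: "one_form b"
  shows "wedge a (wedge b g) U = - wedge b (wedge a g) U"
proof (cases "finite U")
  case False then show ?thesis by (simp add: wedge_infinite)
next
  case U: True
  define F where "F u v = (if u \<noteq> v then sg u (U - {u}) * a {u} * (sg v (U - {u} - {v}) * b {v} * g (U - {u} - {v})) else 0)" for u v
  define G where "G v u = (if u \<noteq> v then sg v (U - {v}) * b {v} * (sg u (U - {v} - {u}) * a {u} * g (U - {v} - {u})) else 0)" for u v
  have "wedge a (wedge b g) U = (\<Sum>u\<in>U. \<Sum>v\<in>U. F u v)"
  proof (subst wedge_one[OF a U], rule sum.cong[OF refl])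
    fix u assume u: "u \<in> U"
    have "wedge b g (U - {u}) = (\<Sum>v\<in>U - {u}. sg v (U - {u} - {v}) * b {v} * g (U - {u} - {v}))"
      using wedge_one[OF b] U by simp
    also have "\<dots> = (\<Sum>v\<in>U. if u \<noteq> v then sg v (U - {u} - {v}) * b {v} * g (U - {u} - {v}) else 0)"
      using U u by (simp add: sum.If_cases Int_Diff Diff_eq[symmetric]) (rule sum.cong, auto)
    finally show "sg u (U - {u}) * a {u} * wedge b g (U - {u}) = (\<Sum>v\<in>U. F u v)"
      by (simp add: F_def sum_distrib_left if_distrib cong: if_cong)
  qed
  moreover have "wedge b (wedge a g) U = (\<Sum>v\<in>U. \<Sum>u\<in>U. G v u)"
  proof (subst wedge_one[OF b U], rule sum.cong[OF refl])
    fix v assume v: "v \<in> U"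
    have "wedge a g (U - {v}) = (\<Sum>u\<in>U - {v}. sg u (U - {v} - {u}) * a {u} * g (U - {v} - {u}))"
      using wedge_one[OF a] U by simp
    also have "\<dots> = (\<Sum>u\<in>U. if u \<noteq> v then sg u (U - {v} - {u}) * a {u} * g (U - {v} - {u}) else 0)"
      using U v by (simp add: sum.If_cases Int_Diff Diff_eq[symmetric]) (rule sum.cong, auto)
    finally show "sg v (U - {v}) * b {v} * wedge a g (U - {v}) = (\<Sum>u\<in>U. G v u)"
      by (simp add: G_def sum_distrib_left if_distrib cong: if_cong)
  qed
  moreover have "(\<Sum>v\<in>U. \<Sum>u\<in>U. G v u) = (\<Sum>u\<in>U. \<Sum>v\<in>U. G v u)" by (rule sum.swap)
  moreover have "F u v = - G v u" if "u \<in> U" "v \<in> U" for u v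
  proof (cases "u = v")
    case True then show ?thesis by (simp add: F_def G_def)
  next
    case False
    have "U - {u} - {v} = U - {v} - {u}" by auto
    then show ?thesis using sg_swap[OF U that False] False unfolding F_def G_def
      by (simp add: algebra_simps)
  qed
  ultimately show ?thesis by (simp add: sum_negf)
qed

lemma wedge_scale2: "wedge a (\<lambda>U. c * b U) U = c * wedge a b U"
  unfolding wedge_def by (simp add: sum_distrib_left algebra_simps)

lemma wedge_zero2: "wedge a (\<lambda>_. 0) U = 0"
  unfolding wedge_def by simp

lemma wedge_self: "one_form a \<Longrightarrow> wedge a (wedge a g) U = 0"
  using wedge_anticomm[of a a g U] by simp

lemma wedge_list_Cons: "wedge_list (x # xs) = wedge x (wedge_list xs)"
  unfolding wedge_list_def by simp

lemma wedge_in_zero: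
  assumes "one_form a" "\<forall>x\<in>set xs. one_form x" "a \<in> set xs"
  shows "wedge a (wedge_list xs) U = 0"
  using assms(2,3)
proof (induction xs arbitrary: U)
  case Nil then show ?case by simp
next
  case (Cons x xs)
  show ?case
  proof (cases "a = x")
    case True then show ?thesis using wedge_self assms(1) by (simp add: wedge_list_Cons)
  next
    case False
    then have "a \<in> set xs" using Cons by simp
    then have "wedge a (wedge_list xs) = (\<lambda>_. 0)" using Cons by auto
    moreover have "one_form x" using Cons by simp
    ultimately show ?thesis using wedge_anticomm[OF assms(1), of x "wedge_list xs" U]
      by (simp add: wedge_list_Cons wedge_zero2)
  qed
qed

lemma wedge_list_insort:
  assumes f: "\<And>y. one_form (f y)" and "sorted L" "distinct L" "x \<notin> set L"
  shows "wedge_list (map f (insort x L)) U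
     = (-1) ^ card {t\<in>set L. t < x} * wedge (f x) (wedge_list (map f L)) U"
  using assms(2-)
proof (induction L arbitrary: U)
  case Nil then show ?case by (simp add: wedge_list_Cons)
next
  case (Cons y L)
  show ?case
  proof (cases "x \<le> y")
    case True
    then have "{t\<in>set (y # L). t < x} = {}" using Cons.prems by auto
    then have c0: "card {t\<in>set (y # L). t < x} = 0" by (simp only: card.empty)
    show ?thesis unfolding c0 using True by (simp add: wedge_list_Cons)
  next
    case False
    then have yx: "y < x" by simp
    have "{t\<in>set (y # L). t < x} = insert y {t\<in>set L. t < x}" using yx by auto
    moreover have "y \<notin> {t\<in>set L. t < x}" using Cons.prems by auto
    ultimately have c: "card {t\<in>set (y # L). t < x} = Suc (card {t\<in>set L. t < x})" by simp
    have IH: "wedge_list (map f (insort x L)) = (\<lambda>U. (-1) ^ card {t\<in>set L. t < x} * wedge (f x) (wedge_list (map f L)) U)"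
      using Cons by auto
    have "wedge_list (map f (insort x (y # L))) U = wedge (f y) (wedge_list (map f (insort x L))) U"
      using False by (simp add: wedge_list_Cons)
    also have "\<dots> = (-1) ^ card {t\<in>set L. t < x} * wedge (f y) (wedge (f x) (wedge_list (map f L))) U"
      by (simp only: IH wedge_scale2)
    also have "\<dots> = (-1) ^ card {t\<in>set (y # L). t < x} * wedge (f x) (wedge (f y) (wedge_list (map f L))) U"
      by (simp only: c wedge_anticomm[OF f f, of y x] power_Suc) simp
    also have "\<dots> = (-1) ^ card {t\<in>set (y # L). t < x} * wedge (f x) (wedge_list (map f (y # L))) U"
      by (simp only: list.map wedge_list_Cons)
    finally show ?thesis .
  qed
qed

lemma pick_eqI: "x \<in> S \<Longrightarrow> card {a\<in>S. a < x} = i \<Longrightarrow> pick S i = x"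
  using pick_card_in_set by blast

lemma bij_pick: "finite U \<Longrightarrow> bij_betw (pick U) {..<card U} U"
proof -
  assume U: "finite U"
  have inj: "inj_on (pick U) {..<card U}"
    by (rule inj_onI) (metis lessThan_iff nat_neq_iff pick_mono)
  have sub: "pick U ` {..<card U} \<subseteq> U" using pick_in_set by auto
  have "card (pick U ` {..<card U}) = card U" using card_image[OF inj] by simp
  then have "pick U ` {..<card U} = U" using card_subset_eq[OF U sub] by simp
  then show ?thesis using inj unfolding bij_betw_def by simp
qed

lemma pick_remove:
  assumes U: "finite U" and i: "i < card U" and a: "a < card U - 1"
  shows "pick (U - {pick U i}) a = pick U (if a < i then a else Suc a)"
proof -
  define j where "j = (if a < i then a else Suc a)"
  have j: "j < card U" "j \<noteq> i" using i a unfolding j_def by auto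
  have xU: "pick U j \<in> U" using pick_in_set j by auto
  have ne: "pick U j \<noteq> pick U i" using pick_mono[of i U j] pick_mono[of j U i] i j
    by (metis nat_neq_iff)
  have "card {t\<in>U - {pick U i}. t < pick U j} = a"
  proof (cases "a < i")
    case True
    then have "pick U j < pick U i" using pick_mono[of i U j] i unfolding j_def by simp
    then have "{t\<in>U - {pick U i}. t < pick U j} = {t\<in>U. t < pick U j}" by auto
    then show ?thesis using card_pick[of j U] j True unfolding j_def by simp
  next
    case False
    then have "pick U i < pick U j" using pick_mono[of j U i] j unfolding j_def by simp
    then have "{t\<in>U - {pick U i}. t < pick U j} = {t\<in>U. t < pick U j} - {pick U i}" by auto
    moreover have "pick U i \<in> {t\<in>U. t < pick U j}" using pick_in_set[of i U] i \<open>pick U i < pick U j\<close> by simp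
    ultimately show ?thesis using card_pick[of j U] j False U unfolding j_def by simp
  qed
  then show ?thesis using xU ne unfolding j_def[symmetric] by (intro pick_eqI) auto
qed

lemma wedge_list_det:
  assumes "\<forall>f\<in>set fs. one_form f" "finite U" "card U = length fs"
  shows "wedge_list fs U = det (mat (length fs) (length fs) (\<lambda>(i,j). (fs!j) {pick U i}))"
  using assms
proof (induction fs arbitrary: U)
  case Nil
  then have "U = {}" by simp
  then show ?case by (simp add: wedge_list_def unit_form_def)
next
  case (Cons f fs)
  define m where "m = length fs"
  have f: "one_form f" and fs: "\<forall>f\<in>set fs. one_form f" using Cons.prems by auto
  have U: "finite U" and cU: "card U = Suc m" using Cons.prems m_def by auto
  define A where "A = mat (Suc m) (Suc m) (\<lambda>(i,j). ((f # fs)!j) {pick U i})"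
  have "wedge_list (f # fs) U = (\<Sum>u\<in>U. sg u (U - {u}) * f {u} * wedge_list fs (U - {u}))"
    by (simp add: wedge_list_Cons wedge_one[OF f U])
  also have "\<dots> = (\<Sum>i<Suc m. sg (pick U i) (U - {pick U i}) * f {pick U i} * wedge_list fs (U - {pick U i}))"
    using sum.reindex_bij_betw[OF bij_pick[OF U], symmetric] cU by simp
  also have "\<dots> = (\<Sum>i<Suc m. A $$ (i, 0) * cofactor A i 0)"
  proof (rule sum.cong[OF refl])
    fix i assume i: "i \<in> {..<Suc m}"
    then have iU: "i < card U" using cU by simp
    have "{t\<in>U - {pick U i}. t < pick U i} = {t\<in>U. t < pick U i}" by auto
    then have sgi: "sg (pick U i) (U - {pick U i}) = (-1) ^ i"
      unfolding sg_def using card_pick[of i U] iU by simp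
    have fin: "finite (U - {pick U i})" "card (U - {pick U i}) = length fs"
      using U cU pick_in_set[of i U] iU m_def by auto
    have "wedge_list fs (U - {pick U i}) = det (mat m m (\<lambda>(a,b). (fs!b) {pick (U - {pick U i}) a}))"
      using Cons.IH[OF fs fin] m_def by simp
    also have "mat m m (\<lambda>(a,b). (fs!b) {pick (U - {pick U i}) a}) = mat_delete A i 0"
      unfolding mat_delete_def A_def
      by (rule eq_matI) (auto simp: pick_remove[OF U iU] cU)
    finally have "wedge_list fs (U - {pick U i}) = det (mat_delete A i 0)" .
    moreover have "A $$ (i, 0) = f {pick U i}" using i unfolding A_def by simp
    ultimately show "sg (pick U i) (U - {pick U i}) * f {pick U i} * wedge_list fs (U - {pick U i}) =
        A $$ (i, 0) * cofactor A i 0"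
      unfolding cofactor_def sgi by simp
  qed
  also have "\<dots> = det A"
    by (rule laplace_expansion_column[symmetric]) (auto simp: A_def)
  finally show ?case unfolding A_def m_def by simp
qed

definition dz :: "nat \<Rightarrow> cform" where
  "dz i T = (if T = {i} then 1 else 0)"

lemma one_form_dz: "one_form (dz i)"
  unfolding one_form_def dz_def by auto

lemma one_form_pull1: "one_form (pull1 n Q s)"
  unfolding one_form_def pull1_def by auto

lemma pull1_single: "pull1 n Q s {r} = (if r < n then (if s < n then (if s = r then 1 else 0) else Q $$ (r, s - n)) else 0)"
  unfolding pull1_def by auto

lemma pull1_dz: "i < n \<Longrightarrow> pull1 n Q i = dz i"
  unfolding pull1_def dz_def by (rule ext) auto

lemma wedge_dz:
  assumes U: "finite U"
  shows "wedge (dz i) b U = (if i \<in> U then sg i (U - {i}) * b (U - {i}) else 0)"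
proof -
  have "wedge (dz i) b U = (\<Sum>u\<in>U. if u = i then sg u (U - {u}) * b (U - {u}) else 0)"
    by (subst wedge_one[OF one_form_dz U]) (rule sum.cong, auto simp: dz_def)
  also have "\<dots> = (if i \<in> U then sg i (U - {i}) * b (U - {i}) else 0)"
    using U by (simp add: sum.delta)
  finally show ?thesis .
qed

lemma neg1_pow: "(-1::complex) ^ c = 1 \<or> (-1::complex) ^ c = -1"
  by (induction c) auto

lemma sg_pm: "sg u U = 1 \<or> sg u U = -1"
  unfolding sg_def by (rule neg1_pow)

lemma foldr_dz:
  assumes "distinct L" "set L \<subseteq> U" "finite U"
  shows "\<exists>s. (s = 1 \<or> s = -1) \<and> (\<forall>b. foldr wedge (map dz L) b U = s * b (U - set L))"
  using assms
proof (induction L arbitrary: U)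
  case Nil then show ?case by (intro exI[of _ 1]) simp
next
  case (Cons x L)
  have "distinct L" "set L \<subseteq> U - {x}" "finite (U - {x})" using Cons.prems by auto
  from Cons.IH[OF this] obtain s where s: "s = 1 \<or> s = -1"
    "\<forall>b. foldr wedge (map dz L) b (U - {x}) = s * b (U - {x} - set L)" by blast
  have xU: "x \<in> U" using Cons.prems by simp
  show ?case
  proof (intro exI[of _ "sg x (U - {x}) * s"] conjI allI)
    show "sg x (U - {x}) * s = 1 \<or> sg x (U - {x}) * s = -1" using s(1) sg_pm[of x "U - {x}"] by auto
    fix b
    have "U - {x} - set L = U - set (x # L)" by auto
    then show "foldr wedge (map dz (x # L)) b U = sg x (U - {x}) * s * b (U - set (x # L))"
      using s(2) xU Cons.prems(3) by (simp add: wedge_dz)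
  qed
qed

lemma card_less_sorted_nth:
  assumes J: "finite J" and b: "b < card J"
  shows "card {a\<in>J. a < sorted_list_of_set J ! b} = b"
proof -
  define xs where "xs = sorted_list_of_set J"
  have sw: "sorted_wrt (<) xs" and len: "length xs = card J" and st: "set xs = J" and d: "distinct xs"
    using J unfolding xs_def by auto
  have lt: "\<And>i j. i < j \<Longrightarrow> j < length xs \<Longrightarrow> xs ! i < xs ! j"
    using sw by (simp add: sorted_wrt_iff_nth_less)
  have "{a\<in>J. a < xs ! b} = set (take b xs)"
  proof
    show "{a \<in> J. a < xs ! b} \<subseteq> set (take b xs)"
    proof
      fix a assume a: "a \<in> {a \<in> J. a < xs ! b}"
      then obtain c where c: "c < length xs" "a = xs ! c" using st by (auto simp: in_set_conv_nth)
      have "c < b"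
      proof (rule ccontr)
        assume "\<not> c < b"
        then have "b = c \<or> b < c" by auto
        then have "xs ! b \<le> xs ! c" using lt[of b c] c by auto
        moreover have "xs ! c < xs ! b" using a c by simp
        ultimately show False by simp
      qed
      then show "a \<in> set (take b xs)" using c by (auto simp: in_set_conv_nth)
    qed
    show "set (take b xs) \<subseteq> {a \<in> J. a < xs ! b}"
    proof
      fix a assume "a \<in> set (take b xs)"
      then obtain c where c: "c < b" "a = xs ! c" using b len by (auto simp: in_set_conv_nth)
      then show "a \<in> {a \<in> J. a < xs ! b}" using lt[of c b] b len st c(2)
        by (metis (mono_tags, lifting) mem_Collect_eq nth_mem order.strict_trans)
    qed
  qed
  moreover have "card (set (take b xs)) = b" using d b len by (simp add: distinct_card)
  ultimately show ?thesis unfolding xs_def by simp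
qed

lemma sorted_nth_pick:
  assumes "finite J" "b < card J"
  shows "sorted_list_of_set J ! b = pick J b"
proof -
  have "sorted_list_of_set J ! b \<in> J" using assms
    by (metis length_sorted_list_of_set nth_mem set_sorted_list_of_set)
  then show ?thesis using card_less_sorted_nth[OF assms] pick_eqI by metis
qed

lemma pick_shift:
  assumes J: "finite J" and ge: "\<forall>j\<in>J. n \<le> j" and b: "b < card J"
  shows "pick ((\<lambda>j. j - n) ` J) b = pick J b - n"
proof (rule pick_eqI)
  have pJ: "pick J b \<in> J" using pick_in_set b by auto
  then show "pick J b - n \<in> (\<lambda>j. j - n) ` J" by auto
  have inj: "inj_on (\<lambda>j. j - n) J"
  proof (rule inj_onI)
    fix x y assume "x \<in> J" "y \<in> J" "x - n = y - n"
    then show "x = y" using ge by (metis le_add_diff_inverse2)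
  qed
  have "{a \<in> (\<lambda>j. j - n) ` J. a < pick J b - n} = (\<lambda>j. j - n) ` {a\<in>J. a < pick J b}"
  proof (rule equalityI; rule subsetI)
    fix x assume "x \<in> {a \<in> (\<lambda>j. j - n) ` J. a < pick J b - n}"
    then obtain j where j: "j \<in> J" "x = j - n" "j - n < pick J b - n" by auto
    then have "j < pick J b" using ge pJ by (metis diff_le_mono not_le)
    then show "x \<in> (\<lambda>j. j - n) ` {a\<in>J. a < pick J b}" using j by auto
  next
    fix x assume "x \<in> (\<lambda>j. j - n) ` {a\<in>J. a < pick J b}"
    then obtain j where j: "j \<in> J" "x = j - n" "j < pick J b" by auto
    then have "j - n < pick J b - n" using ge by (meson diff_less_mono)
    then show "x \<in> {a \<in> (\<lambda>j. j - n) ` J. a < pick J b - n}" using j by auto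
  qed
  moreover have "card ((\<lambda>j. j - n) ` {a\<in>J. a < pick J b}) = card {a\<in>J. a < pick J b}"
    by (rule card_image) (rule inj_on_subset[OF inj], auto)
  ultimately show "card {a \<in> (\<lambda>j. j - n) ` J. a < pick J b - n} = b"
    using card_pick[of b J] b by simp
qed

definition Wf :: "nat \<Rightarrow> complex mat \<Rightarrow> nat set \<Rightarrow> cform" where
  "Wf n Q S = wedge_list (map (pull1 n Q) (sorted_list_of_set S))"

lemma sorted_split:
  assumes "finite I" "finite J" "\<forall>i\<in>I. \<forall>j\<in>J. i < j"
  shows "sorted_list_of_set (I \<union> J) = sorted_list_of_set I @ sorted_list_of_set J"
proof -
  have d: "I \<inter> J = {}" using assms(3) by auto
  have "sorted_wrt (<) (sorted_list_of_set I @ sorted_list_of_set J) \<and>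
     set (sorted_list_of_set I @ sorted_list_of_set J) = I \<union> J \<and>
     length (sorted_list_of_set I @ sorted_list_of_set J) = card (I \<union> J)"
    using assms d by (simp add: sorted_wrt_append card_Un_disjoint)
  then show ?thesis using sorted_list_of_set.sorted_key_list_of_set_unique[of "I \<union> J"] assms
    by (simp only: map_ident finite_Un subset_UNIV simp_thms)
qed

lemma Wf_minor:
  assumes S: "S \<subseteq> {0..<2*n}" and cJ: "card (S \<inter> {n..<2*n}) = k"
    and cI: "card (S \<inter> {0..<n}) = n - k" and kn: "k \<le> n"
  shows "\<exists>s. (s = 1 \<or> s = -1) \<and> (\<forall>Q \<in> carrier_mat n n.
     Wf n Q S {0..<n} = s * minor Q ({0..<n} - S) ((\<lambda>j. j - n) ` (S \<inter> {n..<2*n})))"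
proof -
  define I where "I = S \<inter> {0..<n}"
  define J where "J = S \<inter> {n..<2*n}"
  define V where "V = {0..<n} - I"
  define J' where "J' = (\<lambda>j. j - n) ` J"
  define xs where "xs = sorted_list_of_set I"
  define ys where "ys = sorted_list_of_set J"
  have fin: "finite I" "finite J" unfolding I_def J_def by auto
  have SIJ: "S = I \<union> J" using S unfolding I_def J_def by auto
  have sS: "sorted_list_of_set S = xs @ ys"
    unfolding SIJ xs_def ys_def by (rule sorted_split) (auto simp: fin I_def J_def)
  obtain s where s: "s = 1 \<or> s = -1" "\<forall>b. foldr wedge (map dz xs) b {0..<n} = s * b ({0..<n} - set xs)"
    using foldr_dz[of xs "{0..<n}"] fin unfolding xs_def I_def by auto
  have V': "{0..<n} - S = V" unfolding V_def I_def by auto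
  have cV: "card V = k" unfolding V_def using cI kn by (simp add: card_Diff_subset I_def)
  have ly: "length ys = k" using cJ unfolding ys_def J_def by simp
  have J'sub: "J' \<subseteq> {0..<n}" unfolding J'_def J_def by auto
  have injJ: "inj_on (\<lambda>j. j - n) J"
  proof (rule inj_onI)
    fix x y assume "x \<in> J" "y \<in> J" "x - n = y - n"
    then show "x = y" unfolding J_def by (metis IntD2 atLeastLessThan_iff le_add_diff_inverse2)
  qed
  have cJ': "card J' = k" unfolding J'_def using card_image[OF injJ] cJ J_def by simp
  show ?thesis
  proof (intro exI[of _ s] conjI ballI)
    show "s = 1 \<or> s = -1" by fact
    fix Q :: "complex mat" assume Q: "Q \<in> carrier_mat n n"
    have mx: "map (pull1 n Q) xs = map dz xs"
      using fin unfolding xs_def I_def by (intro map_cong) (auto simp: pull1_dz)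
    have "Wf n Q S {0..<n} = foldr wedge (map dz xs) (wedge_list (map (pull1 n Q) ys)) {0..<n}"
      unfolding Wf_def sS by (simp add: wedge_list_def mx)
    also have "\<dots> = s * wedge_list (map (pull1 n Q) ys) V"
      using s(2) fin unfolding V_def xs_def by simp
    also have "wedge_list (map (pull1 n Q) ys) V = det (mat k k (\<lambda>(i,j). (map (pull1 n Q) ys ! j) {pick V i}))"
      using wedge_list_det[of "map (pull1 n Q) ys" V] cV ly one_form_pull1 unfolding V_def by auto
    also have "mat k k (\<lambda>(i,j). (map (pull1 n Q) ys ! j) {pick V i}) = submatrix Q V J'"
    proof -
      have d1: "card {i. i < dim_row Q \<and> i \<in> V} = k"
      proof -
        have "{i. i < dim_row Q \<and> i \<in> V} = V" using Q unfolding V_def by auto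
        then show ?thesis using cV by simp
      qed
      have d2: "card {j. j < dim_col Q \<and> j \<in> J'} = k"
      proof -
        have "{j. j < dim_col Q \<and> j \<in> J'} = J'" using Q J'sub by auto
        then show ?thesis using cJ' by simp
      qed
      show ?thesis
      proof (rule eq_matI)
        fix i j assume i: "i < dim_row (submatrix Q V J')" and j: "j < dim_col (submatrix Q V J')"
        then have ik: "i < k" and jk: "j < k" using d1 d2 by (auto simp: dim_submatrix)
        have pV: "pick V i \<in> V" using pick_in_set[of i V] ik cV by simp
        have yj: "ys ! j = pick J j" unfolding ys_def using sorted_nth_pick[of J j] fin jk cJ J_def by simp
        have pJ: "pick J j \<in> J" using pick_in_set[of j J] jk cJ J_def by simp
        have pJ': "pick J' j = pick J j - n" unfolding J'_def
          using pick_shift[of J n j] fin jk cJ J_def by simp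
        show "mat k k (\<lambda>(i,j). (map (pull1 n Q) ys ! j) {pick V i}) $$ (i, j) = submatrix Q V J' $$ (i, j)"
          using ik jk d1 d2 pV pJ ly unfolding submatrix_index[OF i[unfolded dim_submatrix] j[unfolded dim_submatrix]]
          by (simp add: yj pull1_single pJ' V_def J_def)
      qed (auto simp: dim_submatrix d1 d2)
    qed
    finally show "Wf n Q S {0..<n} = s * minor Q ({0..<n} - S) ((\<lambda>j. j - n) ` (S \<inter> {n..<2*n}))"
      unfolding minor_def V' J'_def J_def .
  qed
qed



definition phi :: "nat \<Rightarrow> nat set \<times> nat set \<Rightarrow> nat set" where
  "phi n RC = ({0..<n} - fst RC) \<union> ((\<lambda>j. j + n) ` snd RC)"

definition psi :: "nat \<Rightarrow> nat set \<Rightarrow> nat set \<times> nat set" where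
  "psi n S = ({0..<n} - S, (\<lambda>j. j - n) ` (S \<inter> {n..<2*n}))"

definition SupS :: "nat \<Rightarrow> nat \<Rightarrow> nat set set" where
  "SupS n k = {S. S \<subseteq> {0..<2*n} \<and> card (S \<inter> {n..<2*n}) = k \<and> card (S \<inter> {0..<n}) = n - k}"

lemma card_shift_down:
  fixes J :: "nat set"
  assumes "finite J" "\<forall>j\<in>J. n \<le> j" shows "card ((\<lambda>j. j - n) ` J) = card J"
proof (rule card_image, rule inj_onI)
  fix x y assume "x \<in> J" "y \<in> J" "x - n = y - n"
  moreover have "n \<le> x" "n \<le> y" using assms calculation by auto
  ultimately show "x = y" by arith
qed

lemma bij_phi:
  assumes kn: "k \<le> n"
  shows "bij_betw (phi n) (minor_index n k) (SupS n k)"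
proof (rule bij_betw_byWitness[where f' = "psi n"])
  show "\<forall>a\<in>minor_index n k. psi n (phi n a) = a"
  proof
    fix RC assume "RC \<in> minor_index n k"
    then obtain R C where RC: "RC = (R, C)" "R \<subseteq> {0..<n}" "C \<subseteq> {0..<n}" unfolding minor_index_def by auto
    have 1: "{0..<n} - (({0..<n} - R) \<union> (\<lambda>j. j + n) ` C) = R" using RC by auto
    have "(({0..<n} - R) \<union> (\<lambda>j. j + n) ` C) \<inter> {n..<2*n} = (\<lambda>j. j + n) ` C" using RC by auto
    then have 2: "(\<lambda>j. j - n) ` ((({0..<n} - R) \<union> (\<lambda>j. j + n) ` C) \<inter> {n..<2*n}) = C"
      by (simp add: image_image)
    show "psi n (phi n RC) = RC" unfolding psi_def phi_def RC(1) using 1 2 by simp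
  qed
  show "\<forall>a'\<in>SupS n k. phi n (psi n a') = a'"
  proof
    fix S assume "S \<in> SupS n k"
    then have S: "S \<subseteq> {0..<2*n}" unfolding SupS_def by auto
    have "(\<lambda>j. j - n + n) ` (S \<inter> {n..<2*n}) = (\<lambda>j. j) ` (S \<inter> {n..<2*n})"
      by (rule image_cong) auto
    then have "(\<lambda>j. j + n) ` (\<lambda>j. j - n) ` (S \<inter> {n..<2*n}) = S \<inter> {n..<2*n}"
      by (simp add: image_image)
    then show "phi n (psi n S) = S" unfolding psi_def phi_def using S by auto
  qed
  show "phi n ` minor_index n k \<subseteq> SupS n k"
  proof
    fix S assume "S \<in> phi n ` minor_index n k"
    then obtain R C where RC: "S = phi n (R, C)" "R \<subseteq> {0..<n}" "C \<subseteq> {0..<n}" "card R = k" "card C = k"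
      unfolding minor_index_def by auto
    have a: "S \<inter> {n..<2*n} = (\<lambda>j. j + n) ` C" using RC unfolding phi_def by auto
    have b: "S \<inter> {0..<n} = {0..<n} - R" using RC unfolding phi_def by auto
    have "card ((\<lambda>j. j + n) ` C) = k" using RC by (simp add: card_image)
    moreover have "card ({0..<n} - R) = n - k" using RC by (simp add: card_Diff_subset finite_subset)
    moreover have "S \<subseteq> {0..<2*n}" using RC unfolding phi_def by auto
    ultimately show "S \<in> SupS n k" unfolding SupS_def using a b by simp
  qed
  show "psi n ` SupS n k \<subseteq> minor_index n k"
  proof
    fix RC assume "RC \<in> psi n ` SupS n k"
    then obtain S where S: "RC = psi n S" "S \<subseteq> {0..<2*n}" "card (S \<inter> {n..<2*n}) = k" "card (S \<inter> {0..<n}) = n - k"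
      unfolding SupS_def by auto
    have "{0..<n} - S = {0..<n} - (S \<inter> {0..<n})" by auto
    then have "card ({0..<n} - S) = k" using S kn by (simp add: card_Diff_subset)
    moreover have "card ((\<lambda>j. j - n) ` (S \<inter> {n..<2*n})) = k"
      using card_shift_down[of "S \<inter> {n..<2*n}" n] S by simp
    moreover have "(\<lambda>j. j - n) ` (S \<inter> {n..<2*n}) \<subseteq> {0..<n}" by auto
    ultimately show "RC \<in> minor_index n k" unfolding minor_index_def psi_def S(1) by auto
  qed
qed

definition sgS :: "nat \<Rightarrow> nat set \<Rightarrow> complex" where
  "sgS n S = (SOME s. (s = 1 \<or> s = -1) \<and> (\<forall>Q \<in> carrier_mat n n.
     Wf n Q S {0..<n} = s * minor Q ({0..<n} - S) ((\<lambda>j. j - n) ` (S \<inter> {n..<2*n}))))"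

lemma sgS:
  assumes "S \<in> SupS n k" "k \<le> n"
  shows "sgS n S = 1 \<or> sgS n S = -1"
    "Q \<in> carrier_mat n n \<Longrightarrow> Wf n Q S {0..<n} = sgS n S * minor Q (fst (psi n S)) (snd (psi n S))"
proof -
  have "\<exists>s. (s = 1 \<or> s = -1) \<and> (\<forall>Q \<in> carrier_mat n n.
     Wf n Q S {0..<n} = s * minor Q ({0..<n} - S) ((\<lambda>j. j - n) ` (S \<inter> {n..<2*n})))"
    using Wf_minor assms unfolding SupS_def by auto
  from someI_ex[OF this] have
    "(sgS n S = 1 \<or> sgS n S = -1) \<and> (\<forall>Q \<in> carrier_mat n n.
     Wf n Q S {0..<n} = sgS n S * minor Q ({0..<n} - S) ((\<lambda>j. j - n) ` (S \<inter> {n..<2*n})))"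
    unfolding sgS_def .
  then show "sgS n S = 1 \<or> sgS n S = -1"
    "Q \<in> carrier_mat n n \<Longrightarrow> Wf n Q S {0..<n} = sgS n S * minor Q (fst (psi n S)) (snd (psi n S))"
    unfolding psi_def fst_conv snd_conv by blast+
qed

lemma P_form_Wf: "P_form n \<tau> Q = (\<Sum>S\<in>{S. S \<subseteq> {0..<2*n}}. \<tau> S * Wf n Q S {0..<n})"
  unfolding P_form_def Wf_def by simp

lemma P_form_Sup:
  assumes "\<tau> \<in> Lambda n k"
  shows "P_form n \<tau> Q = (\<Sum>S\<in>SupS n k. \<tau> S * Wf n Q S {0..<n})"
  unfolding P_form_Wf
proof (rule sum.mono_neutral_right)
  show "finite {S. S \<subseteq> {0..<2*n}}" by (simp add: finite_Collect_subsets)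
  show "SupS n k \<subseteq> {S. S \<subseteq> {0..<2*n}}" unfolding SupS_def by auto
  show "\<forall>i\<in>{S. S \<subseteq> {0..<2*n}} - SupS n k. \<tau> i * Wf n Q i {0..<n} = 0"
  proof
    fix S assume S: "S \<in> {S. S \<subseteq> {0..<2*n}} - SupS n k"
    have "\<tau> S = 0"
    proof (rule ccontr)
      assume "\<tau> S \<noteq> 0"
      then have "S \<subseteq> {0..<2*n} \<and> card (S \<inter> {0..<n}) = n - k \<and> card (S \<inter> {n..<2*n}) = k"
        using assms unfolding Lambda_def by blast
      then show False using S unfolding SupS_def by blast
    qed
    then show "\<tau> S * Wf n Q S {0..<n} = 0" by simp
  qed
qed

lemma subset_dir:
  assumes kn: "k \<le> n" and tau: "\<tau> \<in> Lambda n k"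
  shows "restrict (P_form n \<tau>) (SM n) \<in> M_span n k"
proof -
  define c where "c RC = \<tau> (phi n RC) * sgS n (phi n RC)" for RC
  have "restrict (P_form n \<tau>) (SM n) = restrict (\<lambda>Q. \<Sum>RC\<in>minor_index n k. c RC * minor Q (fst RC) (snd RC)) (SM n)"
  proof (rule restrict_ext)
    fix Q assume "Q \<in> SM n"
    then have Q: "Q \<in> carrier_mat n n" unfolding SM_def by auto
    have "P_form n \<tau> Q = (\<Sum>S\<in>SupS n k. \<tau> S * (sgS n S * minor Q (fst (psi n S)) (snd (psi n S))))"
      unfolding P_form_Sup[OF tau] by (rule sum.cong[OF refl]) (simp only: sgS(2)[OF _ kn Q])
    also have "\<dots> = (\<Sum>RC\<in>minor_index n k. \<tau> (phi n RC) * (sgS n (phi n RC) * minor Q (fst (psi n (phi n RC))) (snd (psi n (phi n RC)))))"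
      using sum.reindex_bij_betw[OF bij_phi[OF kn], symmetric] by simp
    also have "\<dots> = (\<Sum>RC\<in>minor_index n k. c RC * minor Q (fst RC) (snd RC))"
    proof (intro sum.cong refl)
      fix RC assume RC: "RC \<in> minor_index n k"
      have "psi n (phi n RC) = RC"
      proof -
        obtain R C where RC': "RC = (R, C)" "R \<subseteq> {0..<n}" "C \<subseteq> {0..<n}" using RC unfolding minor_index_def by auto
        have 1: "{0..<n} - (({0..<n} - R) \<union> (\<lambda>j. j + n) ` C) = R" using RC' by auto
        have "(({0..<n} - R) \<union> (\<lambda>j. j + n) ` C) \<inter> {n..<2*n} = (\<lambda>j. j + n) ` C" using RC' by auto
        then have 2: "(\<lambda>j. j - n) ` ((({0..<n} - R) \<union> (\<lambda>j. j + n) ` C) \<inter> {n..<2*n}) = C"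
          by (simp add: image_image)
        show ?thesis unfolding psi_def phi_def RC'(1) using 1 2 by simp
      qed
      then show "\<tau> (phi n RC) * (sgS n (phi n RC) * minor Q (fst (psi n (phi n RC))) (snd (psi n (phi n RC)))) =
         c RC * minor Q (fst RC) (snd RC)" unfolding c_def by simp
    qed
    finally show "P_form n \<tau> Q = (\<Sum>RC\<in>minor_index n k. c RC * minor Q (fst RC) (snd RC))" .
  qed
  then show ?thesis unfolding M_span_def by blast
qed



lemma wedge_sum1:
  "wedge (\<lambda>T. \<Sum>j\<in>A. c j * a j T) g U = (\<Sum>j\<in>A. c j * wedge (a j) g U)"
proof -
  have "wedge (\<lambda>T. \<Sum>j\<in>A. c j * a j T) g U = (\<Sum>S\<in>Pow U. \<Sum>j\<in>A. c j * (wsign S (U - S) * a j S * g (U - S)))"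
    unfolding wedge_def by (intro sum.cong refl) (simp add: sum_distrib_left sum_distrib_right mult_ac)
  also have "\<dots> = (\<Sum>j\<in>A. \<Sum>S\<in>Pow U. c j * (wsign S (U - S) * a j S * g (U - S)))" by (rule sum.swap)
  also have "\<dots> = (\<Sum>j\<in>A. c j * wedge (a j) g U)" unfolding wedge_def by (simp add: sum_distrib_left)
  finally show ?thesis .
qed

lemma wedge_sum2:
  "wedge a (\<lambda>T. \<Sum>j\<in>A. c j * g j T) U = (\<Sum>j\<in>A. c j * wedge a (g j) U)"
proof -
  have "wedge a (\<lambda>T. \<Sum>j\<in>A. c j * g j T) U = (\<Sum>S\<in>Pow U. \<Sum>j\<in>A. c j * (wsign S (U - S) * a S * g j (U - S)))"
    unfolding wedge_def by (intro sum.cong refl) (simp add: sum_distrib_left sum_distrib_right mult_ac)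
  also have "\<dots> = (\<Sum>j\<in>A. \<Sum>S\<in>Pow U. c j * (wsign S (U - S) * a S * g j (U - S)))" by (rule sum.swap)
  also have "\<dots> = (\<Sum>j\<in>A. c j * wedge a (g j) U)" unfolding wedge_def by (simp add: sum_distrib_left)
  finally show ?thesis .
qed

lemma pull1_shift:
  "i < n \<Longrightarrow> pull1 n Q (n + i) = (\<lambda>T. \<Sum>j<n. Q $$ (j, i) * dz j T)"
proof (rule ext)
  fix T assume i: "i < n"
  show "pull1 n Q (n + i) T = (\<Sum>j<n. Q $$ (j, i) * dz j T)"
  proof (cases "\<exists>r<n. T = {r}")
    case True
    then obtain r where r: "r < n" "T = {r}" by auto
    have "(\<Sum>j<n. Q $$ (j, i) * dz j T) = (\<Sum>j<n. if j = r then Q $$ (j, i) else 0)"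
      by (rule sum.cong) (auto simp: dz_def r)
    also have "\<dots> = Q $$ (r, i)" using r by (simp add: sum.delta)
    finally show ?thesis using r by (simp add: pull1_single)
  next
    case False
    then have "dz j T = 0" if "j < n" for j using that unfolding dz_def by auto
    then show ?thesis using False unfolding pull1_def by auto
  qed
qed

lemma sym_sum_zero:
  assumes Q: "\<And>i j. i < n \<Longrightarrow> j < n \<Longrightarrow> Q $$ (i, j) = Q $$ (j, i)"
    and X: "\<And>i j. X i j = - X j i"
  shows "(\<Sum>i<n. \<Sum>j<n. Q $$ (j, i) * X i j) = (0::complex)"
proof -
  let ?S = "(\<Sum>i<n. \<Sum>j<n. Q $$ (j, i) * X i j)"
  have "?S = (\<Sum>j<n. \<Sum>i<n. Q $$ (j, i) * X i j)" by (rule sum.swap)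
  also have "\<dots> = (\<Sum>j<n. \<Sum>i<n. - (Q $$ (i, j) * X j i))"
  proof (intro sum.cong refl)
    fix i j assume "i \<in> {..<n}" "j \<in> {..<n}"
    then have "Q $$ (j, i) = Q $$ (i, j)" using Q by simp
    moreover have "X i j = - X j i" by (rule X)
    ultimately show "Q $$ (j, i) * X i j = - (Q $$ (i, j) * X j i)" by simp
  qed
  also have "\<dots> = - ?S" by (simp add: sum_negf)
  finally show ?thesis by simp
qed

lemma omega_pull_zero:
  assumes Q: "Q \<in> SM n"
  shows "(\<Sum>i<n. wedge (pull1 n Q i) (wedge (pull1 n Q (n + i)) g) U) = 0"
proof -
  have Qs: "Q $$ (i, j) = Q $$ (j, i)" if "i < n" "j < n" for i j
    using Q that unfolding SM_def by (metis (mono_tags, lifting) carrier_matD index_transpose_mat mem_Collect_eq)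
  have "(\<Sum>i<n. wedge (pull1 n Q i) (wedge (pull1 n Q (n + i)) g) U)
      = (\<Sum>i<n. \<Sum>j<n. Q $$ (j, i) * wedge (dz i) (wedge (dz j) g) U)"
  proof (rule sum.cong[OF refl])
    fix i assume i: "i \<in> {..<n}"
    have "wedge (pull1 n Q (n + i)) g = (\<lambda>V. \<Sum>j<n. Q $$ (j, i) * wedge (dz j) g V)"
      using i by (simp add: pull1_shift wedge_sum1 fun_eq_iff)
    then show "wedge (pull1 n Q i) (wedge (pull1 n Q (n + i)) g) U = (\<Sum>j<n. Q $$ (j, i) * wedge (dz i) (wedge (dz j) g) U)"
      using i by (simp add: pull1_dz wedge_sum2)
  qed
  also have "\<dots> = 0"
    by (rule sym_sum_zero[OF Qs]) (assumption+, rule wedge_anticomm[OF one_form_dz one_form_dz])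
  finally show ?thesis .
qed

lemma Wf_insert:
  assumes "finite T" "x \<notin> T"
  shows "Wf n Q (insert x T) U = (-1) ^ card {t\<in>T. t < x} * wedge (pull1 n Q x) (Wf n Q T) U"
proof -
  have "sorted_list_of_set (insert x T) = insort x (sorted_list_of_set T)"
    using assms by (simp add: sorted_list_of_set_insert)
  then show ?thesis unfolding Wf_def
    using wedge_list_insort[of "pull1 n Q" "sorted_list_of_set T" x U] assms one_form_pull1 by simp
qed

lemma wsign_pair:
  assumes "i < n" "finite T"
  shows "wsign {i, n + i} T = (-1) ^ card {t\<in>T. t < i} * (-1) ^ card {t\<in>T. t < n + i}"
proof -
  have e: "{(s, t). s \<in> {i, n + i} \<and> t \<in> T \<and> t < s} = (\<lambda>t. (i, t)) ` {t\<in>T. t < i} \<union> (\<lambda>t. (n + i, t)) ` {t\<in>T. t < n + i}"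
    by auto
  have "card ((\<lambda>t. (i, t)) ` {t\<in>T. t < i} \<union> (\<lambda>t. (n + i, t)) ` {t\<in>T. t < n + i})
      = card ((\<lambda>t. (i, t)) ` {t\<in>T. t < i}) + card ((\<lambda>t. (n + i, t)) ` {t\<in>T. t < n + i})"
    using assms by (intro card_Un_disjoint) auto
  also have "\<dots> = card {t\<in>T. t < i} + card {t\<in>T. t < n + i}"
    by (simp add: card_image inj_on_def)
  finally show ?thesis unfolding wsign_def e by (simp add: power_add)
qed

lemma omega_relation:
  assumes Q: "Q \<in> SM n" and T: "T \<subseteq> {0..<2*n}"
  shows "(\<Sum>i\<in>{i. i < n \<and> i \<notin> T \<and> n + i \<notin> T}. wsign {i, n + i} T * Wf n Q (insert i (insert (n + i) T)) {0..<n}) = 0"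
proof -
  have fT: "finite T" using T finite_subset by blast
  let ?h = "\<lambda>i. wedge (pull1 n Q i) (wedge (pull1 n Q (n + i)) (Wf n Q T)) {0..<n}"
  have "(\<Sum>i\<in>{i. i < n \<and> i \<notin> T \<and> n + i \<notin> T}. wsign {i, n + i} T * Wf n Q (insert i (insert (n + i) T)) {0..<n})
      = (\<Sum>i\<in>{i. i < n \<and> i \<notin> T \<and> n + i \<notin> T}. ?h i)"
  proof (rule sum.cong[OF refl])
    fix i assume "i \<in> {i. i < n \<and> i \<notin> T \<and> n + i \<notin> T}"
    then have i: "i < n" "i \<notin> T" "n + i \<notin> T" by auto
    have c: "{t\<in>insert (n + i) T. t < i} = {t\<in>T. t < i}" by auto
    have W2: "Wf n Q (insert (n + i) T) = (\<lambda>U. (-1) ^ card {t\<in>T. t < n + i} * wedge (pull1 n Q (n + i)) (Wf n Q T) U)"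
      using Wf_insert[OF fT i(3)] by auto
    have A: "Wf n Q (insert i (insert (n + i) T)) {0..<n} = (-1) ^ card {t\<in>insert (n + i) T. t < i} *
        wedge (pull1 n Q i) (Wf n Q (insert (n + i) T)) {0..<n}"
      by (rule Wf_insert) (use fT i in auto)
    have "Wf n Q (insert i (insert (n + i) T)) {0..<n}
       = (-1) ^ card {t\<in>T. t < i} * ((-1) ^ card {t\<in>T. t < n + i} * ?h i)"
      using A unfolding c W2 wedge_scale2 .
    moreover have "wsign {i, n + i} T = (-1) ^ card {t\<in>T. t < i} * (-1) ^ card {t\<in>T. t < n + i}"
      using wsign_pair[OF i(1) fT] .
    ultimately show "wsign {i, n + i} T * Wf n Q (insert i (insert (n + i) T)) {0..<n} = ?h i"
      by (simp add: algebra_simps power_mult_distrib[symmetric] flip: power_add)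
  qed
  also have "\<dots> = (\<Sum>i<n. ?h i)"
  proof (rule sum.mono_neutral_left)
    show "finite {..<n}" by simp
    show "{i. i < n \<and> i \<notin> T \<and> n + i \<notin> T} \<subseteq> {..<n}" by auto
    show "\<forall>i\<in>{..<n} - {i. i < n \<and> i \<notin> T \<and> n + i \<notin> T}. ?h i = 0"
    proof
      fix i assume "i \<in> {..<n} - {i. i < n \<and> i \<notin> T \<and> n + i \<notin> T}"
      then have i: "i < n" "i \<in> T \<or> n + i \<in> T" by auto
      have inset: "pull1 n Q x \<in> set (map (pull1 n Q) (sorted_list_of_set T))" if "x \<in> T" for x
        using that fT by simp
      have allone: "\<forall>x\<in>set (map (pull1 n Q) (sorted_list_of_set T)). one_form x" using one_form_pull1 by auto
      show "?h i = 0"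
      proof (cases "n + i \<in> T")
        case True
        have "wedge (pull1 n Q (n + i)) (Wf n Q T) = (\<lambda>_. 0)"
          using wedge_in_zero[OF one_form_pull1 allone inset[OF True]] unfolding Wf_def by auto
        then show ?thesis by (simp add: wedge_zero2)
      next
        case False
        then have "i \<in> T" using i by auto
        have "wedge (pull1 n Q i) (Wf n Q T) = (\<lambda>_. 0)"
          using wedge_in_zero[OF one_form_pull1 allone inset[OF \<open>i \<in> T\<close>]] unfolding Wf_def by auto
        moreover have "?h i = - wedge (pull1 n Q (n + i)) (wedge (pull1 n Q i) (Wf n Q T)) {0..<n}"
          by (rule wedge_anticomm[OF one_form_pull1 one_form_pull1])
        ultimately show ?thesis by (simp add: wedge_zero2)
      qed
    qed
  qed
  also have "\<dots> = 0" using omega_pull_zero[OF Q] .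
  finally show ?thesis .
qed



lemma wedge_omega:
  assumes U: "finite U"
  shows "wedge (omega_s n) \<tau> U = (\<Sum>i\<in>{i. i < n \<and> i \<in> U \<and> n + i \<in> U}. wsign {i, n + i} (U - {i, n + i}) * \<tau> (U - {i, n + i}))"
proof -
  let ?I = "{i. i < n \<and> i \<in> U \<and> n + i \<in> U}"
  let ?pr = "\<lambda>i. {i, n + i}"
  have "wedge (omega_s n) \<tau> U = (\<Sum>A\<in>?pr ` ?I. wsign A (U - A) * omega_s n A * \<tau> (U - A))"
    unfolding wedge_def
  proof (rule sum.mono_neutral_right)
    show "finite (Pow U)" using U by simp
    show "?pr ` ?I \<subseteq> Pow U" by auto
    show "\<forall>A\<in>Pow U - ?pr ` ?I. wsign A (U - A) * omega_s n A * \<tau> (U - A) = 0"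
    proof
      fix A assume A: "A \<in> Pow U - ?pr ` ?I"
      have "omega_s n A = 0"
      proof (rule ccontr)
        assume "omega_s n A \<noteq> 0"
        then obtain i where "i < n" "A = {i, n + i}" unfolding omega_s_def by (auto split: if_splits)
        then show False using A by auto
      qed
      then show "wsign A (U - A) * omega_s n A * \<tau> (U - A) = 0" by simp
    qed
  qed
  also have "\<dots> = (\<Sum>i\<in>?I. wsign (?pr i) (U - ?pr i) * omega_s n (?pr i) * \<tau> (U - ?pr i))"
  proof (rule sum.reindex[unfolded comp_def])
    show "inj_on ?pr ?I"
    proof (rule inj_onI)
      fix i j assume "i \<in> ?I" "j \<in> ?I" "{i, n + i} = {j, n + j}"
      then have "i \<in> {j, n + j}" "j \<in> {i, n + i}" "i < n" "j < n" by auto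
      then show "i = j" by auto
    qed
  qed
  also have "\<dots> = (\<Sum>i\<in>?I. wsign {i, n + i} (U - {i, n + i}) * \<tau> (U - {i, n + i}))"
  proof (intro sum.cong refl)
    fix i assume "i \<in> ?I"
    then have "\<exists>j<n. {i, n + i} = {j, n + j}" by blast
    then have "omega_s n {i, n + i} = 1" unfolding omega_s_def by (simp only: if_True)
    then show "wsign {i, n + i} (U - {i, n + i}) * omega_s n {i, n + i} * \<tau> (U - {i, n + i}) =
      wsign {i, n + i} (U - {i, n + i}) * \<tau> (U - {i, n + i})" by simp
  qed
  finally show ?thesis .
qed

lemma P_form_sum: "P_form n (\<lambda>S. \<Sum>a\<in>A. c a * t a S) Q = (\<Sum>a\<in>A. c a * P_form n (t a) Q)"
  unfolding P_form_def by (simp add: sum_distrib_left sum_distrib_right mult_ac sum.swap[of _ A])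

lemma PLambda_sum:
  assumes "\<forall>a\<in>A. t a \<in> PLambda n k"
  shows "(\<lambda>S. \<Sum>a\<in>A. c a * t a S) \<in> PLambda n k"
  unfolding PLambda_def
proof (rule CollectI, rule conjI)
  show "(\<lambda>S. \<Sum>a\<in>A. c a * t a S) \<in> Lambda n k"
    unfolding Lambda_def
  proof (intro CollectI allI impI)
  fix S assume "(\<Sum>a\<in>A. c a * t a S) \<noteq> 0"
  then obtain a where a: "a \<in> A" "c a * t a S \<noteq> 0" by (rule sum.not_neutral_contains_not_neutral)
  then have "t a S \<noteq> 0" by simp
  moreover have "t a \<in> Lambda n k" using assms a unfolding PLambda_def by auto
  ultimately show "S \<subseteq> {0..<2 * n} \<and> card (S \<inter> {0..<n}) = n - k \<and> card (S \<inter> {n..<2 * n}) = k"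
    unfolding Lambda_def by blast
  qed
next
  have "wedge (omega_s n) (t a) = (\<lambda>_. 0)" if "a \<in> A" for a using assms that unfolding PLambda_def by auto
  then show "wedge (omega_s n) (\<lambda>S. \<Sum>a\<in>A. c a * t a S) = (\<lambda>_. 0)"
    by (simp add: wedge_sum2 fun_eq_iff)
qed

lemma PLambda_scale: "t \<in> PLambda n k \<Longrightarrow> (\<lambda>S. a * t S) \<in> PLambda n k"
  using PLambda_sum[where A="{()}" and t="\<lambda>_. t" and c="\<lambda>_. a" and n=n and k=k] by simp

lemma P_form_scale: "P_form n (\<lambda>S. a * t S) Q = a * P_form n t Q"
  using P_form_sum[where A="{()}" and t="\<lambda>_. t" and c="\<lambda>_. a" and n=n and Q=Q] by simp

locale blk =
  fixes n :: nat and R C :: "nat set"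
  assumes R: "R \<subseteq> {0..<n}" and C: "C \<subseteq> {0..<n}" and RC: "card R = card C"
begin

definition "B0 = {0..<n} - (R \<union> C)"
definition "C0 = R \<inter> C"
definition "M = (R - C) \<union> (C - R)"
definition "S0 = C - R"
definition "m = card S0"
definition "E X = B0 \<union> X \<union> ((\<lambda>j. n + j) ` (C0 \<union> X))"

lemma finRC: "finite R" "finite C"
  using R C finite_subset by auto

lemma fins: "finite R" "finite C" "finite B0" "finite C0" "finite M" "finite S0"
  using finRC unfolding B0_def C0_def M_def S0_def by auto

lemma card_RC: "card (R - C) = m"
proof -
  have "card (R - C) = card R - card (R \<inter> C)" using fins by (simp add: card_Diff_subset_Int)
  moreover have "card (C - R) = card C - card (R \<inter> C)" using fins
    by (metis Int_commute card_Diff_subset_Int finite_Int)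
  ultimately show ?thesis unfolding m_def S0_def using RC by simp
qed

lemma S0M: "S0 \<subseteq> M" unfolding S0_def M_def by auto

lemma card_M: "card M = 2 * m"
proof -
  have "card M = card (R - C) + card (C - R)" unfolding M_def using fins
    by (intro card_Un_disjoint) auto
  then show ?thesis using card_RC unfolding m_def S0_def by simp
qed

lemma card_M_S0: "card (M - S0) = m"
proof -
  have "M - S0 = R - C" unfolding M_def S0_def by auto
  then show ?thesis using card_RC by simp
qed

lemma part: "i < n \<Longrightarrow> i \<in> B0 \<or> i \<in> C0 \<or> i \<in> M"
  unfolding B0_def C0_def M_def by auto

lemma disj: "B0 \<inter> C0 = {}" "B0 \<inter> M = {}" "C0 \<inter> M = {}"
  unfolding B0_def C0_def M_def by auto

lemma sub_n: "B0 \<subseteq> {0..<n}" "C0 \<subseteq> {0..<n}" "M \<subseteq> {0..<n}"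
  unfolding B0_def C0_def M_def using R C by auto

lemma E_low: "X \<subseteq> M \<Longrightarrow> E X \<inter> {0..<n} = B0 \<union> X"
  unfolding E_def using sub_n by auto

lemma E_high: "X \<subseteq> M \<Longrightarrow> E X \<inter> {n..<2*n} = (\<lambda>j. n + j) ` (C0 \<union> X)"
  unfolding E_def using sub_n by auto

lemma E_sub: "X \<subseteq> M \<Longrightarrow> E X \<subseteq> {0..<2*n}"
  unfolding E_def using sub_n by auto

lemma E_M: "X \<subseteq> M \<Longrightarrow> E X \<inter> M = X"
  unfolding E_def using sub_n disj by auto

lemma E_inj: "X \<subseteq> M \<Longrightarrow> Y \<subseteq> M \<Longrightarrow> E X = E Y \<Longrightarrow> X = Y"
  using E_M by metis

lemma E_mem_low: "i < n \<Longrightarrow> i \<in> E X \<longleftrightarrow> i \<in> B0 \<or> i \<in> X"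
  unfolding E_def by auto

lemma E_mem_high: "X \<subseteq> M \<Longrightarrow> n + i \<in> E X \<longleftrightarrow> i \<in> C0 \<or> i \<in> X"
  using sub_n unfolding E_def by auto

lemma E_insert: "insert i (insert (n + i) (E X)) = E (insert i X)"
  unfolding E_def by auto

lemma E_remove: "X \<subseteq> M \<Longrightarrow> i \<in> X \<Longrightarrow> E X - {i, n + i} = E (X - {i})"
  unfolding E_def using sub_n disj by auto

lemma finite_E: "X \<subseteq> M \<Longrightarrow> finite (E X)"
  using E_sub finite_subset by blast

definition "cst i = card {b\<in>B0. b < i} + card B0 + card {c\<in>C0. c < i}"

lemma wsign_E:
  assumes X: "X \<subseteq> M" and i: "i \<in> M" "i \<notin> X"
  shows "wsign {i, n + i} (E X) = (-1) ^ (cst i + card X)"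
proof -
  have iN: "i < n" using i sub_n by auto
  have fX: "finite X" using X fins finite_subset by blast
  let ?x = "card {t\<in>X. t < i}"
  have A1: "{t\<in>E X. t < i} = {t\<in>B0. t < i} \<union> {t\<in>X. t < i}"
    unfolding E_def using iN by auto
  have c1: "card {t\<in>E X. t < i} = card {t\<in>B0. t < i} + ?x"
    unfolding A1 using fins fX disj X by (intro card_Un_disjoint) auto
  have A2: "{t\<in>E X. t < n + i} = (B0 \<union> X) \<union> (\<lambda>j. n + j) ` ({c\<in>C0. c < i} \<union> {t\<in>X. t < i})"
    unfolding E_def using sub_n X by auto
  have "card {t\<in>E X. t < n + i} = card (B0 \<union> X) + card ((\<lambda>j. n + j) ` ({c\<in>C0. c < i} \<union> {t\<in>X. t < i}))"
    unfolding A2 using fins fX sub_n X by (intro card_Un_disjoint) auto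
  also have "card (B0 \<union> X) = card B0 + card X"
    using fins fX disj X by (intro card_Un_disjoint) auto
  also have "card ((\<lambda>j. n + j) ` ({c\<in>C0. c < i} \<union> {t\<in>X. t < i})) = card ({c\<in>C0. c < i} \<union> {t\<in>X. t < i})"
    by (simp add: card_image)
  also have "\<dots> = card {c\<in>C0. c < i} + ?x"
    using fins fX disj X by (intro card_Un_disjoint) auto
  finally have c2: "card {t\<in>E X. t < n + i} = card B0 + card X + (card {c\<in>C0. c < i} + ?x)" .
  have "wsign {i, n + i} (E X) = (-1) ^ (card {t\<in>E X. t < i} + card {t\<in>E X. t < n + i})"
    using wsign_pair[OF iN finite_E[OF X]] by (simp add: power_add)
  also have "card {t\<in>E X. t < i} + card {t\<in>E X. t < n + i} = (cst i + card X) + 2 * ?x"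
    unfolding c1 c2 cst_def by simp
  also have "(-1::complex) ^ ((cst i + card X) + 2 * ?x) = (-1) ^ (cst i + card X)"
    by (simp add: power_add power_mult)
  finally show ?thesis .
qed

definition "Xs = {X. X \<subseteq> M \<and> card X = m}"
definition "kap X = (-1::complex) ^ (\<Sum>x\<in>X. cst x)"
definition "ff j = (-1::complex) ^ j * fact j * fact (m - j)"
definition "co X = kap X * ff (card (X \<inter> S0))"
definition "pp U = (if U \<in> E ` Xs then co (U \<inter> M) else 0)"

lemma kap_remove: "finite X \<Longrightarrow> i \<in> X \<Longrightarrow> kap X = (-1) ^ cst i * kap (X - {i})"
  unfolding kap_def by (simp add: sum.remove power_add)

lemma ff_rel:
  assumes "1 \<le> j" "j \<le> m"
  shows "of_nat j * ff (j - 1) + of_nat (Suc m - j) * ff j = 0"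
proof -
  obtain j' where j: "j = Suc j'" using assms by (cases j) auto
  obtain d where d: "m - j' = Suc d" using assms j by (metis Suc_diff_Suc Suc_le_eq)
  have d2: "m - Suc j' = d" using d by simp
  have "of_nat j * ff (j - 1) = (-1) ^ j' * (of_nat (Suc j') * fact j') * fact (Suc d)"
    by (simp add: ff_def j d)
  also have "\<dots> = (-1) ^ j' * fact (Suc j') * fact (Suc d)" by simp
  finally have 1: "of_nat j * ff (j - 1) = (-1) ^ j' * fact (Suc j') * fact (Suc d)" .
  have "of_nat (Suc m - j) * ff j = of_nat (Suc d) * ((-1) ^ Suc j' * fact (Suc j') * fact d)"
    unfolding ff_def j d2 using d by simp
  also have "\<dots> = - ((-1) ^ j' * fact (Suc j') * (of_nat (Suc d) * fact d))" by simp
  also have "\<dots> = - ((-1) ^ j' * fact (Suc j') * fact (Suc d))" by (simp del: of_nat_Suc)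
  finally show ?thesis using 1 by simp
qed

lemma sum_split_S0:
  assumes Z: "finite Z" and "card Z = Suc m"
  shows "(\<Sum>i\<in>Z. ff (card ((Z - {i}) \<inter> S0))) =
    of_nat (card (Z \<inter> S0)) * ff (card (Z \<inter> S0) - 1) + of_nat (Suc m - card (Z \<inter> S0)) * ff (card (Z \<inter> S0))"
proof -
  let ?j = "card (Z \<inter> S0)"
  have "(\<Sum>i\<in>Z. ff (card ((Z - {i}) \<inter> S0))) = (\<Sum>i\<in>Z \<inter> S0. ff (card ((Z - {i}) \<inter> S0))) + (\<Sum>i\<in>Z - S0. ff (card ((Z - {i}) \<inter> S0)))"
    using Z by (metis sum.Int_Diff)
  also have "(\<Sum>i\<in>Z \<inter> S0. ff (card ((Z - {i}) \<inter> S0))) = (\<Sum>i\<in>Z \<inter> S0. ff (?j - 1))"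
  proof (rule sum.cong[OF refl])
    fix i assume "i \<in> Z \<inter> S0"
    then have "(Z - {i}) \<inter> S0 = (Z \<inter> S0) - {i}" "i \<in> Z \<inter> S0" by auto
    then show "ff (card ((Z - {i}) \<inter> S0)) = ff (?j - 1)" using Z by simp
  qed
  also have "(\<Sum>i\<in>Z - S0. ff (card ((Z - {i}) \<inter> S0))) = (\<Sum>i\<in>Z - S0. ff ?j)"
  proof (rule sum.cong[OF refl])
    fix i assume "i \<in> Z - S0"
    then have "(Z - {i}) \<inter> S0 = Z \<inter> S0" by auto
    then show "ff (card ((Z - {i}) \<inter> S0)) = ff ?j" by simp
  qed
  also have "card (Z - S0) = Suc m - ?j"
    using assms by (metis card_Diff_subset_Int finite_Int)
  ultimately show ?thesis by simp
qed

lemma pp_prim: "wedge (omega_s n) pp U = 0"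
proof (cases "finite U")
  case False then show ?thesis by (simp add: wedge_infinite)
next
  case U: True
  let ?I = "{i. i < n \<and> i \<in> U \<and> n + i \<in> U}"
  have W: "wedge (omega_s n) pp U = (\<Sum>i\<in>?I. wsign {i, n + i} (U - {i, n + i}) * pp (U - {i, n + i}))"
    by (rule wedge_omega[OF U])
  show ?thesis
  proof (cases "\<exists>Z. Z \<subseteq> M \<and> card Z = Suc m \<and> U = E Z")
    case True
    then obtain Z where Z: "Z \<subseteq> M" "card Z = Suc m" "U = E Z" by blast
    have fZ: "finite Z" using Z fins finite_subset by blast
    have I: "?I = Z"
    proof
      show "?I \<subseteq> Z"
      proof
        fix i assume "i \<in> ?I"
        then have "i < n" "i \<in> B0 \<or> i \<in> Z" "i \<in> C0 \<or> i \<in> Z"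
          using E_mem_low E_mem_high[OF Z(1)] Z(3) by auto
        then show "i \<in> Z" using disj by auto
      qed
      show "Z \<subseteq> ?I" using Z sub_n E_mem_low E_mem_high[OF Z(1)] by auto
    qed
    have "wedge (omega_s n) pp U = (\<Sum>i\<in>Z. (-1) ^ m * kap Z * ff (card ((Z - {i}) \<inter> S0)))"
      unfolding W I
    proof (rule sum.cong[OF refl])
      fix i assume i: "i \<in> Z"
      have ZM: "Z - {i} \<subseteq> M" using Z by auto
      have cZ: "card (Z - {i}) = m" using Z i fZ by simp
      have e: "U - {i, n + i} = E (Z - {i})" using E_remove[OF Z(1) i] Z(3) by simp
      have "pp (E (Z - {i})) = co (Z - {i})"
        unfolding pp_def Xs_def using ZM cZ E_M[OF ZM] by auto
      moreover have "wsign {i, n + i} (E (Z - {i})) = (-1) ^ (cst i + m)"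
        using wsign_E[OF ZM] i Z cZ by auto
      moreover have "kap Z = (-1) ^ cst i * kap (Z - {i})" using kap_remove[OF fZ i] .
      ultimately show "wsign {i, n + i} (U - {i, n + i}) * pp (U - {i, n + i}) = (-1) ^ m * kap Z * ff (card ((Z - {i}) \<inter> S0))"
        unfolding e co_def by (simp add: power_add algebra_simps)
    qed
    also have "\<dots> = (-1) ^ m * kap Z * (\<Sum>i\<in>Z. ff (card ((Z - {i}) \<inter> S0)))"
      by (simp add: sum_distrib_left)
    also have "(\<Sum>i\<in>Z. ff (card ((Z - {i}) \<inter> S0))) = 0"
    proof -
      have j1: "1 \<le> card (Z \<inter> S0)"
      proof (rule ccontr)
        assume "\<not> 1 \<le> card (Z \<inter> S0)"
        then have "card (Z \<inter> S0) = 0" by simp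
        then have "Z \<inter> S0 = {}" using fZ by simp
        then have "Z \<subseteq> M - S0" using Z by auto
        then have "card Z \<le> m" using card_mono[of "M - S0" Z] fins card_M_S0 by auto
        then show False using Z by simp
      qed
      have j2: "card (Z \<inter> S0) \<le> m" unfolding m_def using fins by (simp add: card_mono)
      show ?thesis using sum_split_S0[OF fZ Z(2)] ff_rel[OF j1 j2] by simp
    qed
    finally show ?thesis by simp
  next
    case False
    have "wsign {i, n + i} (U - {i, n + i}) * pp (U - {i, n + i}) = 0" if i: "i \<in> ?I" for i
    proof -
      have "pp (U - {i, n + i}) = 0"
      proof (rule ccontr)
        assume "pp (U - {i, n + i}) \<noteq> 0"
        then obtain X where X: "X \<subseteq> M" "card X = m" "U - {i, n + i} = E X"
          unfolding pp_def Xs_def by (auto split: if_splits)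
        have "i \<notin> E X" "n + i \<notin> E X" using X(3) by auto
        then have "i \<notin> B0" "i \<notin> X" "i \<notin> C0" using E_mem_low E_mem_high[OF X(1)] i by auto
        then have iM: "i \<in> M" using part i by auto
        have "U = insert i (insert (n + i) (E X))" using X(3) i by auto
        then have "U = E (insert i X)" using E_insert by simp
        moreover have "insert i X \<subseteq> M" using X iM by auto
        moreover have "card (insert i X) = Suc m"
          using X \<open>i \<notin> X\<close> fins finite_subset by (metis card_insert_disjoint)
        ultimately show False using False by blast
      qed
      then show ?thesis by simp
    qed
    then show ?thesis unfolding W by (intro sum.neutral) blast
  qed
qed

definition "k = card R"

lemma card_B0: "card B0 + m + k = n"
proof -
  have RC_sub: "R \<union> C \<subseteq> {0..<n}" using R C by auto
  have "card B0 = n - card (R \<union> C)" unfolding B0_def using RC_sub by (simp add: card_Diff_subset finRC)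
  moreover have "card (R \<union> C) = card R + card (C - R)"
  proof -
    have "R \<union> C = R \<union> (C - R)" by auto
    moreover have "card (R \<union> (C - R)) = card R + card (C - R)"
      using finRC by (intro card_Un_disjoint) auto
    ultimately show ?thesis by simp
  qed
  moreover have "card (R \<union> C) \<le> n" using card_mono[OF _ RC_sub] by simp
  ultimately show ?thesis unfolding k_def m_def S0_def by simp
qed

lemma card_C0: "card C0 + m = k"
proof -
  have "C = C0 \<union> S0" unfolding C0_def S0_def by auto
  moreover have "C0 \<inter> S0 = {}" unfolding C0_def S0_def by auto
  ultimately have "card C = card C0 + card S0" using fins by (metis card_Un_disjoint)
  then show ?thesis unfolding k_def m_def using RC by simp
qed

lemma E_Sup: assumes X: "X \<in> Xs" shows "E X \<in> SupS n k"
proof -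
  have XM: "X \<subseteq> M" and cX: "card X = m" using X unfolding Xs_def by auto
  have fX: "finite X" using XM fins finite_subset by blast
  have "card (E X \<inter> {0..<n}) = card B0 + m"
    unfolding E_low[OF XM] using fins fX disj XM cX by (subst card_Un_disjoint) auto
  moreover have "card (E X \<inter> {n..<2*n}) = card C0 + m"
  proof -
    have "card (E X \<inter> {n..<2*n}) = card (C0 \<union> X)" unfolding E_high[OF XM] by (simp add: card_image)
    also have "\<dots> = card C0 + m" using fins fX disj XM cX by (subst card_Un_disjoint) auto
    finally show ?thesis .
  qed
  ultimately show ?thesis unfolding SupS_def using E_sub[OF XM] card_B0 card_C0 by auto
qed

lemma pp_Lambda: "pp \<in> Lambda n k"
  unfolding Lambda_def
proof (intro CollectI allI impI)
  fix S assume "pp S \<noteq> 0"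
  then obtain X where X: "X \<in> Xs" "S = E X" unfolding pp_def by (auto split: if_splits)
  then show "S \<subseteq> {0..<2 * n} \<and> card (S \<inter> {0..<n}) = n - k \<and> card (S \<inter> {n..<2 * n}) = k"
    using E_Sup[OF X(1)] unfolding SupS_def by auto
qed

lemma pp_PLambda: "pp \<in> PLambda n k"
  unfolding PLambda_def using pp_Lambda pp_prim by auto

lemma P_pp_sum: "P_form n pp Q = (\<Sum>X\<in>Xs. co X * Wf n Q (E X) {0..<n})"
proof -
  have "P_form n pp Q = (\<Sum>U\<in>E ` Xs. pp U * Wf n Q U {0..<n})"
    unfolding P_form_Wf
  proof (rule sum.mono_neutral_right)
    show "finite {S. S \<subseteq> {0..<2*n}}" by (simp add: finite_Collect_subsets)
    show "E ` Xs \<subseteq> {S. S \<subseteq> {0..<2*n}}" using E_sub unfolding Xs_def by auto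
    show "\<forall>U\<in>{S. S \<subseteq> {0..<2*n}} - E ` Xs. pp U * Wf n Q U {0..<n} = 0"
      unfolding pp_def by auto
  qed
  also have "\<dots> = (\<Sum>X\<in>Xs. pp (E X) * Wf n Q (E X) {0..<n})"
  proof (rule sum.reindex[unfolded comp_def])
    show "inj_on E Xs" using E_inj unfolding Xs_def by (auto simp: inj_on_def)
  qed
  also have "\<dots> = (\<Sum>X\<in>Xs. co X * Wf n Q (E X) {0..<n})"
  proof (rule sum.cong[OF refl])
    fix X assume X: "X \<in> Xs"
    then have "pp (E X) = co X" unfolding pp_def using E_M unfolding Xs_def by auto
    then show "pp (E X) * Wf n Q (E X) {0..<n} = co X * Wf n Q (E X) {0..<n}" by simp
  qed
  finally show ?thesis .
qed

definition "gg j = (-1::complex) ^ j * of_nat (Suc j) * fact j * fact (m - Suc j)"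
definition "cc = (-1::complex) ^ m * fact (Suc m)"

lemma sum_split_gen:
  assumes Z: "finite Z"
  shows "(\<Sum>i\<in>Z. h (card ((Z - {i}) \<inter> S0))) =
    of_nat (card (Z \<inter> S0)) * h (card (Z \<inter> S0) - 1) + of_nat (card Z - card (Z \<inter> S0)) * (h (card (Z \<inter> S0)) :: complex)"
proof -
  let ?j = "card (Z \<inter> S0)"
  have "(\<Sum>i\<in>Z. h (card ((Z - {i}) \<inter> S0))) = (\<Sum>i\<in>Z \<inter> S0. h (card ((Z - {i}) \<inter> S0))) + (\<Sum>i\<in>Z - S0. h (card ((Z - {i}) \<inter> S0)))"
    using Z by (metis sum.Int_Diff)
  also have "(\<Sum>i\<in>Z \<inter> S0. h (card ((Z - {i}) \<inter> S0))) = (\<Sum>i\<in>Z \<inter> S0. h (?j - 1))"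
  proof (rule sum.cong[OF refl])
    fix i assume "i \<in> Z \<inter> S0"
    then have "(Z - {i}) \<inter> S0 = (Z \<inter> S0) - {i}" "i \<in> Z \<inter> S0" by auto
    then show "h (card ((Z - {i}) \<inter> S0)) = h (?j - 1)" using Z by simp
  qed
  also have "(\<Sum>i\<in>Z - S0. h (card ((Z - {i}) \<inter> S0))) = (\<Sum>i\<in>Z - S0. h ?j)"
  proof (rule sum.cong[OF refl])
    fix i assume "i \<in> Z - S0"
    then have "(Z - {i}) \<inter> S0 = Z \<inter> S0" by auto
    then show "h (card ((Z - {i}) \<inter> S0)) = h ?j" by simp
  qed
  also have "card (Z - S0) = card Z - ?j"
    using assms by (metis card_Diff_subset_Int finite_Int)
  ultimately show ?thesis by simp
qed

lemma gg_rel: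
  assumes m1: "1 \<le> m" and jm: "j \<le> m"
  shows "of_nat j * gg (j - 1) + of_nat (m - j) * gg j = ff j - (if j = m then cc else 0)"
proof -
  obtain m' where m': "m = Suc m'" using m1 by (cases m) auto
  consider "j = 0" | "j = m" | "0 < j" "j < m" using jm by linarith
  then show ?thesis
  proof cases
    case 1
    then show ?thesis using m' by (simp add: gg_def ff_def)
  next
    case 2
    have "of_nat j * gg (j - 1) = of_nat (Suc m') * ((-1) ^ m' * of_nat (Suc m') * fact m')"
      using 2 m' by (simp add: gg_def)
    also have "\<dots> = (-1) ^ m' * of_nat (Suc m') * fact (Suc m')" by (simp add: algebra_simps)
    finally have a: "of_nat j * gg (j - 1) = (-1) ^ m' * of_nat (Suc m') * fact (Suc m')" .
    have b: "ff j - cc = (-1) ^ m' * of_nat (Suc m') * fact (Suc m')"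
      using 2 m' unfolding ff_def cc_def by (simp add: algebra_simps)
    show ?thesis using a b 2 by simp
  next
    case 3
    obtain j' where j': "j = Suc j'" using 3 by (cases j) auto
    obtain d where d: "m - j = Suc d" using 3 by (metis Suc_diff_Suc zero_less_diff Suc_pred)
    have d1: "m - Suc j' = Suc d" using d j' by simp
    have d2: "m - Suc (Suc j') = d" using d j' by simp
    have "of_nat j * gg (j - 1) = of_nat (Suc j') * ((-1) ^ j' * of_nat (Suc j') * fact j' * fact (Suc d))"
      using j' d1 by (simp add: gg_def)
    also have "\<dots> = (-1) ^ j' * of_nat (Suc j') * fact (Suc j') * fact (Suc d)" by (simp add: algebra_simps)
    finally have a: "of_nat j * gg (j - 1) = (-1) ^ j' * of_nat (Suc j') * fact (Suc j') * fact (Suc d)" .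
    have "of_nat (m - j) * gg j = of_nat (Suc d) * ((-1) ^ Suc j' * of_nat (Suc (Suc j')) * fact (Suc j') * fact d)"
      using j' d d2 by (simp add: gg_def)
    also have "\<dots> = - ((-1) ^ j' * of_nat (Suc (Suc j')) * fact (Suc j') * fact (Suc d))" by (simp add: algebra_simps)
    finally have b: "of_nat (m - j) * gg j = - ((-1) ^ j' * of_nat (Suc (Suc j')) * fact (Suc j') * fact (Suc d))" .
    have c: "ff j = (-1) ^ Suc j' * fact (Suc j') * fact (Suc d)" using j' d unfolding ff_def by simp
    have "j \<noteq> m" using 3 by simp
    then show ?thesis unfolding a b c by (simp add: algebra_simps)
  qed
qed

definition "Ys = {Y. Y \<subseteq> M \<and> Suc (card Y) = m}"

lemma fin_XY: "finite Xs" "finite Ys"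
proof -
  have "Xs \<subseteq> Pow M" "Ys \<subseteq> Pow M" unfolding Xs_def Ys_def by auto
  then show "finite Xs" "finite Ys" using fins by (auto intro: finite_subset)
qed

lemma rel_Y:
  assumes Q: "Q \<in> SM n" and Y: "Y \<in> Ys"
  shows "(\<Sum>i\<in>M - Y. (-1) ^ (cst i + card Y) * Wf n Q (E (insert i Y)) {0..<n}) = 0"
proof -
  have YM: "Y \<subseteq> M" using Y unfolding Ys_def by auto
  have I: "{i. i < n \<and> i \<notin> E Y \<and> n + i \<notin> E Y} = M - Y"
  proof
    show "{i. i < n \<and> i \<notin> E Y \<and> n + i \<notin> E Y} \<subseteq> M - Y"
    proof
      fix i assume "i \<in> {i. i < n \<and> i \<notin> E Y \<and> n + i \<notin> E Y}"
      then have i: "i < n" "i \<notin> E Y" "n + i \<notin> E Y" by auto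
      then have "i \<notin> B0" "i \<notin> Y" "i \<notin> C0" using E_mem_low[of i Y] E_mem_high[OF YM, of i] by auto
      then show "i \<in> M - Y" using part[of i] i(1) by auto
    qed
    show "M - Y \<subseteq> {i. i < n \<and> i \<notin> E Y \<and> n + i \<notin> E Y}"
    proof
      fix i assume i: "i \<in> M - Y"
      then have "i < n" "i \<notin> B0" "i \<notin> C0" using sub_n disj by auto
      then show "i \<in> {i. i < n \<and> i \<notin> E Y \<and> n + i \<notin> E Y}"
        using E_mem_low[of i Y] E_mem_high[OF YM, of i] i by auto
    qed
  qed
  have "0 = (\<Sum>i\<in>{i. i < n \<and> i \<notin> E Y \<and> n + i \<notin> E Y}. wsign {i, n + i} (E Y) * Wf n Q (insert i (insert (n + i) (E Y))) {0..<n})"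
    using omega_relation[OF Q E_sub[OF YM]] by simp
  also have "\<dots> = (\<Sum>i\<in>M - Y. (-1) ^ (cst i + card Y) * Wf n Q (E (insert i Y)) {0..<n})"
    unfolding I
  proof (rule sum.cong[OF refl])
    fix i assume i: "i \<in> M - Y"
    have "wsign {i, n + i} (E Y) = (-1) ^ (cst i + card Y)" using wsign_E[OF YM] i by auto
    moreover have "insert i (insert (n + i) (E Y)) = E (insert i Y)" by (rule E_insert)
    ultimately show "wsign {i, n + i} (E Y) * Wf n Q (insert i (insert (n + i) (E Y))) {0..<n} =
      (-1) ^ (cst i + card Y) * Wf n Q (E (insert i Y)) {0..<n}" by simp
  qed
  finally show ?thesis by simp
qed

lemma rel_sum:
  assumes Q: "Q \<in> SM n" and m1: "1 \<le> m"
  shows "(\<Sum>X\<in>Xs. kap X * (\<Sum>i\<in>X. gg (card ((X - {i}) \<inter> S0))) * Wf n Q (E X) {0..<n}) = 0"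
proof -
  define F where "F X i = kap X * gg (card ((X - {i}) \<inter> S0)) * Wf n Q (E X) {0..<n}" for X i
  have fY: "finite Y" if "Y \<subseteq> M" for Y using that fins finite_subset by blast
  have "0 = (\<Sum>Y\<in>Ys. kap Y * gg (card (Y \<inter> S0)) * (\<Sum>i\<in>M - Y. (-1) ^ (cst i + card Y) * Wf n Q (E (insert i Y)) {0..<n}))"
    using rel_Y[OF Q] by simp
  also have "\<dots> = (\<Sum>Y\<in>Ys. \<Sum>i\<in>M - Y. kap Y * gg (card (Y \<inter> S0)) * ((-1) ^ (cst i + card Y) * Wf n Q (E (insert i Y)) {0..<n}))"
    by (simp only: sum_distrib_left)
  also have "\<dots> = (\<Sum>Y\<in>Ys. \<Sum>i\<in>M - Y. (-1) ^ (m - 1) * F (insert i Y) i)"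
  proof (intro sum.cong refl)
    fix Y i assume Y: "Y \<in> Ys" and i: "i \<in> M - Y"
    have YM: "Y \<subseteq> M" and cY: "card Y = m - 1" using Y unfolding Ys_def by auto
    have k: "kap (insert i Y) = (-1) ^ cst i * kap Y"
      using kap_remove[of "insert i Y" i] fY[OF YM] i by simp
    have e: "insert i Y - {i} = Y" using i by auto
    show "kap Y * gg (card (Y \<inter> S0)) * ((-1) ^ (cst i + card Y) * Wf n Q (E (insert i Y)) {0..<n})
      = (-1) ^ (m - 1) * F (insert i Y) i"
      unfolding F_def e k cY by (simp add: power_add mult_ac)
  qed
  also have "\<dots> = (-1) ^ (m - 1) * (\<Sum>Y\<in>Ys. \<Sum>i\<in>M - Y. F (insert i Y) i)"
    by (simp add: sum_distrib_left)
  finally have z: "(\<Sum>Y\<in>Ys. \<Sum>i\<in>M - Y. F (insert i Y) i) = 0" by simp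
  have "(\<Sum>Y\<in>Ys. \<Sum>i\<in>M - Y. F (insert i Y) i) = (\<Sum>(Y, i)\<in>Sigma Ys (\<lambda>Y. M - Y). F (insert i Y) i)"
    by (rule sum.Sigma) (use fin_XY fins in auto)
  also have "\<dots> = (\<Sum>(X, i)\<in>Sigma Xs (\<lambda>X. X). F X i)"
  proof -
    have bij: "bij_betw (\<lambda>(Y, i). (insert i Y, i)) (Sigma Ys (\<lambda>Y. M - Y)) (Sigma Xs (\<lambda>X. X))"
    proof (rule bij_betw_byWitness[where f' = "\<lambda>(X, i). (X - {i}, i)"])
      show "\<forall>a\<in>Sigma Ys (\<lambda>Y. M - Y). (\<lambda>(X, i). (X - {i}, i)) ((\<lambda>(Y, i). (insert i Y, i)) a) = a" by auto
      show "\<forall>a\<in>Sigma Xs (\<lambda>X. X). (\<lambda>(Y, i). (insert i Y, i)) ((\<lambda>(X, i). (X - {i}, i)) a) = a" by auto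
      show "(\<lambda>(Y, i). (insert i Y, i)) ` Sigma Ys (\<lambda>Y. M - Y) \<subseteq> Sigma Xs (\<lambda>X. X)"
      proof
        fix b assume "b \<in> (\<lambda>(Y, i). (insert i Y, i)) ` Sigma Ys (\<lambda>Y. M - Y)"
        then obtain Y i where b: "b = (insert i Y, i)" "Y \<subseteq> M" "Suc (card Y) = m" "i \<in> M" "i \<notin> Y"
          unfolding Ys_def by auto
        then have "card (insert i Y) = m" using fY by simp
        then show "b \<in> Sigma Xs (\<lambda>X. X)" using b unfolding Xs_def by auto
      qed
      show "(\<lambda>(X, i). (X - {i}, i)) ` Sigma Xs (\<lambda>X. X) \<subseteq> Sigma Ys (\<lambda>Y. M - Y)"
      proof
        fix b assume "b \<in> (\<lambda>(X, i). (X - {i}, i)) ` Sigma Xs (\<lambda>X. X)"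
        then obtain X i where b: "b = (X - {i}, i)" "X \<subseteq> M" "card X = m" "i \<in> X"
          unfolding Xs_def by auto
        then have "Suc (card (X - {i})) = m" using fY m1 by (simp add: card_Diff_singleton)
        then show "b \<in> Sigma Ys (\<lambda>Y. M - Y)" using b unfolding Ys_def by auto
      qed
    qed
    have "(\<Sum>x\<in>Sigma Ys (\<lambda>Y. M - Y). (\<lambda>(X, i). F X i) ((\<lambda>(Y, i). (insert i Y, i)) x)) = (\<Sum>x\<in>Sigma Xs (\<lambda>X. X). (\<lambda>(X, i). F X i) x)"
      by (rule sum.reindex_bij_betw[OF bij])
    then show ?thesis by (simp add: split_def)
  qed
  also have "\<dots> = (\<Sum>X\<in>Xs. \<Sum>i\<in>X. F X i)"
    by (rule sum.Sigma[symmetric]) (use fin_XY fY in \<open>auto simp: Xs_def\<close>)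
  also have "\<dots> = (\<Sum>X\<in>Xs. kap X * (\<Sum>i\<in>X. gg (card ((X - {i}) \<inter> S0))) * Wf n Q (E X) {0..<n})"
    unfolding F_def by (simp only: sum_distrib_left sum_distrib_right mult.assoc)
  finally show ?thesis using z by simp
qed

lemma S0_Xs: "S0 \<in> Xs" unfolding Xs_def m_def using S0M by auto

lemma j_eq_m: assumes X: "X \<in> Xs" shows "card (X \<inter> S0) = m \<longleftrightarrow> X = S0"
proof
  assume a: "card (X \<inter> S0) = m"
  have XM: "X \<subseteq> M" and cX: "card X = m" using X unfolding Xs_def by auto
  have fX: "finite X" using XM fins finite_subset by blast
  have "X \<inter> S0 = S0" using card_subset_eq[of S0 "X \<inter> S0"] fins a unfolding m_def by auto
  then have "S0 \<subseteq> X" by auto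
  then show "X = S0" using card_subset_eq[OF fX] cX unfolding m_def by auto
next
  assume "X = S0" then show "card (X \<inter> S0) = m" unfolding m_def by simp
qed

lemma P_pp:
  assumes Q: "Q \<in> SM n"
  shows "P_form n pp Q = cc * kap S0 * Wf n Q (E S0) {0..<n}"
proof (cases "m = 0")
  case True
  have S0e: "S0 = {}" using True fins unfolding m_def by simp
  have "Xs = {{}}"
  proof
    show "Xs \<subseteq> {{}}"
    proof
      fix X assume "X \<in> Xs"
      then have "X \<subseteq> M" "card X = 0" using True unfolding Xs_def by auto
      then show "X \<in> {{}}" using fins finite_subset by fastforce
    qed
    show "{{}} \<subseteq> Xs" unfolding Xs_def using True by auto
  qed
  then show ?thesis unfolding P_pp_sum using True S0e by (simp add: co_def kap_def ff_def cc_def)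
next
  case False
  then have m1: "1 \<le> m" by simp
  let ?W = "\<lambda>X. Wf n Q (E X) {0..<n}"
  let ?j = "\<lambda>X. card (X \<inter> S0)"
  have A: "(\<Sum>X\<in>Xs. kap X * (ff (?j X) - (if ?j X = m then cc else 0)) * ?W X) = 0"
  proof -
    have "(\<Sum>X\<in>Xs. kap X * (ff (?j X) - (if ?j X = m then cc else 0)) * ?W X) =
      (\<Sum>X\<in>Xs. kap X * (\<Sum>i\<in>X. gg (card ((X - {i}) \<inter> S0))) * ?W X)"
    proof (rule sum.cong[OF refl])
      fix X assume X: "X \<in> Xs"
      have XM: "X \<subseteq> M" and cX: "card X = m" using X unfolding Xs_def by auto
      have fX: "finite X" using XM fins finite_subset by blast
      have jm: "?j X \<le> m" using cX fX by (metis card_mono inf_le1)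
      have "(\<Sum>i\<in>X. gg (card ((X - {i}) \<inter> S0))) = ff (?j X) - (if ?j X = m then cc else 0)"
        using sum_split_gen[OF fX, of gg] gg_rel[OF m1 jm] cX by simp
      then show "kap X * (ff (?j X) - (if ?j X = m then cc else 0)) * ?W X =
        kap X * (\<Sum>i\<in>X. gg (card ((X - {i}) \<inter> S0))) * ?W X" by simp
    qed
    then show ?thesis using rel_sum[OF Q m1] by simp
  qed
  have B: "(\<Sum>X\<in>Xs. kap X * (if ?j X = m then cc else 0) * ?W X) = cc * kap S0 * ?W S0"
  proof -
    have "(\<Sum>X\<in>Xs. kap X * (if ?j X = m then cc else 0) * ?W X) = (\<Sum>X\<in>Xs. if X = S0 then cc * kap X * ?W X else 0)"
      by (rule sum.cong[OF refl]) (simp add: j_eq_m)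
    also have "\<dots> = cc * kap S0 * ?W S0" using fin_XY S0_Xs by (simp add: sum.delta')
    finally show ?thesis .
  qed
  have "P_form n pp Q = (\<Sum>X\<in>Xs. kap X * ff (?j X) * ?W X)"
    unfolding P_pp_sum co_def by simp
  also have "\<dots> = (\<Sum>X\<in>Xs. kap X * (ff (?j X) - (if ?j X = m then cc else 0)) * ?W X + kap X * (if ?j X = m then cc else 0) * ?W X)"
    by (rule sum.cong[OF refl]) (simp add: algebra_simps)
  also have "\<dots> = cc * kap S0 * ?W S0" using A B by (simp add: sum.distrib)
  finally show ?thesis .
qed

lemma psi_E_S0: "psi n (E S0) = (R, C)"
proof -
  have "{0..<n} - E S0 = {0..<n} - (E S0 \<inter> {0..<n})" by auto
  also have "\<dots> = {0..<n} - (B0 \<union> S0)" using E_low[OF S0M] by simp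
  also have "\<dots> = R" unfolding B0_def S0_def using R C by auto
  finally have 1: "{0..<n} - E S0 = R" .
  have "(\<lambda>j. j - n) ` (E S0 \<inter> {n..<2*n}) = (\<lambda>j. n + j - n) ` (C0 \<union> S0)"
    unfolding E_high[OF S0M] by (simp add: image_image)
  also have "\<dots> = C0 \<union> S0" by simp
  also have "\<dots> = C" unfolding C0_def S0_def by auto
  finally show ?thesis unfolding psi_def using 1 by simp
qed

lemma kn: "k \<le> n" using card_B0 by simp

lemma minor_rep: "\<exists>\<tau>. \<tau> \<in> PLambda n k \<and> (\<forall>Q\<in>SM n. P_form n \<tau> Q = minor Q R C)"
proof -
  define z where "z = cc * kap S0 * sgS n (E S0)"
  have ES: "E S0 \<in> SupS n k" using E_Sup[OF S0_Xs] .
  have z0: "z \<noteq> 0"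
  proof -
    have "(fact (Suc m)::complex) \<noteq> 0" by (rule fact_nonzero)
    then have "cc \<noteq> 0" unfolding cc_def by (simp del: fact_Suc)
    moreover have "kap S0 \<noteq> 0" unfolding kap_def by simp
    moreover have "sgS n (E S0) \<noteq> 0" using sgS(1)[OF ES kn] by auto
    ultimately show ?thesis unfolding z_def by simp
  qed
  have P: "P_form n pp Q = z * minor Q R C" if Q: "Q \<in> SM n" for Q
  proof -
    have Qc: "Q \<in> carrier_mat n n" using Q unfolding SM_def by auto
    have "Wf n Q (E S0) {0..<n} = sgS n (E S0) * minor Q R C"
      using sgS(2)[OF ES kn Qc] psi_E_S0 by simp
    then show ?thesis unfolding z_def P_pp[OF Q] by simp
  qed
  show ?thesis
  proof (intro exI conjI ballI)
    show "(\<lambda>U. inverse z * pp U) \<in> PLambda n k" using PLambda_scale[OF pp_PLambda] .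
    fix Q assume "Q \<in> SM n"
    then show "P_form n (\<lambda>U. inverse z * pp U) Q = minor Q R C"
      using P_form_scale P z0 by simp
  qed
qed

end

lemma minor_rep_global:
  assumes "RC \<in> minor_index n k"
  shows "\<exists>\<tau>. \<tau> \<in> PLambda n k \<and> (\<forall>Q\<in>SM n. P_form n \<tau> Q = minor Q (fst RC) (snd RC))"
proof -
  obtain R C where RC: "RC = (R, C)" "R \<subseteq> {0..<n}" "C \<subseteq> {0..<n}" "card R = k" "card C = k"
    using assms unfolding minor_index_def by auto
  interpret b: blk n R C by unfold_locales (use RC in auto)
  have "b.k = k" unfolding b.k_def using RC by simp
  then show ?thesis using b.minor_rep RC(1) by simp
qed

theorem proposition6p8:
  fixes n k :: nat
  assumes "1 \<le> k" and "k \<le> n"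
  shows "(\<lambda>\<tau>. restrict (P_form n \<tau>) (SM n)) ` PLambda n k = M_span n k"
proof
  show "(\<lambda>\<tau>. restrict (P_form n \<tau>) (SM n)) ` PLambda n k \<subseteq> M_span n k"
  proof
    fix f assume "f \<in> (\<lambda>\<tau>. restrict (P_form n \<tau>) (SM n)) ` PLambda n k"
    then obtain \<tau> where t: "\<tau> \<in> PLambda n k" "f = restrict (P_form n \<tau>) (SM n)" by auto
    then have "\<tau> \<in> Lambda n k" unfolding PLambda_def by auto
    from subset_dir[OF assms(2) this] show "f \<in> M_span n k" unfolding t(2) .
  qed
  show "M_span n k \<subseteq> (\<lambda>\<tau>. restrict (P_form n \<tau>) (SM n)) ` PLambda n k"
  proof
    fix f assume "f \<in> M_span n k"
    then obtain c where f: "f = restrict (\<lambda>Q. \<Sum>RC\<in>minor_index n k. c RC * minor Q (fst RC) (snd RC)) (SM n)"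
      unfolding M_span_def by auto
    have "\<forall>RC\<in>minor_index n k. \<exists>\<tau>. \<tau> \<in> PLambda n k \<and> (\<forall>Q\<in>SM n. P_form n \<tau> Q = minor Q (fst RC) (snd RC))"
      using minor_rep_global by (intro ballI)
    from bchoice[OF this] obtain T where T: "\<forall>RC\<in>minor_index n k. T RC \<in> PLambda n k \<and> (\<forall>Q\<in>SM n. P_form n (T RC) Q = minor Q (fst RC) (snd RC))"
      by blast
    define \<tau> where "\<tau> = (\<lambda>S. \<Sum>RC\<in>minor_index n k. c RC * T RC S)"
    have "\<tau> \<in> PLambda n k" unfolding \<tau>_def by (rule PLambda_sum) (use T in blast)
    moreover have "restrict (P_form n \<tau>) (SM n) = f"
      unfolding f
    proof (rule restrict_ext)
      fix Q assume Q: "Q \<in> SM n"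
      show "P_form n \<tau> Q = (\<Sum>RC\<in>minor_index n k. c RC * minor Q (fst RC) (snd RC))"
        unfolding \<tau>_def P_form_sum
      proof (rule sum.cong[OF refl])
        fix RC assume "RC \<in> minor_index n k"
        then have "P_form n (T RC) Q = minor Q (fst RC) (snd RC)" using T Q by blast
        then show "c RC * P_form n (T RC) Q = c RC * minor Q (fst RC) (snd RC)" by simp
      qed
    qed
    ultimately show "f \<in> (\<lambda>\<tau>. restrict (P_form n \<tau>) (SM n)) ` PLambda n k"
      by (intro image_eqI[where x=\<tau>]) simp_all
  qed
qed


end
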